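(* Let $N\ge3$, $N=2g+1$ or $N=2g+2$ with $g\ge1$, constants $\alpha_1,\dots,\alpha_N$, $\alpha=\sum\alpha_n$, $\beta_n=\alpha_1+\cdots+\alpha_n$, $Q(\lambda)=(-1)^N\lambda\prod_{n=1}^{N-1}(\lambda+\beta_n)$. Let $v(x)$ satisfy $\dot v=\alpha/2$, and set $b_0=1$, $I_0=2v$ if $N=2g+1$, and $b_0=v$, $I_0=v^2+\sum_{n=1}^{2g+1}\beta_n$ if $N=2g+2$. Let $\lambda_1(x),\dots,\lambda_g(x)$ (pairwise distinct, nonzero for the division below) and $z_1(x),\dots,z_g(x)$ (nonzero) solve $\dot\lambda_j=z_j\,\partial H/\partial z_j$, $\dot z_j=-z_j\,\partial H/\partial\lambda_j$ with $H=\sum_{j}\frac{z_j+Q(\lambda_j)z_j^{-1}-I_0\lambda_j^g}{B'(\lambda_j)}$ ($N$ odd), resp. $H=\sum_{j}\frac{z_j+Q(\lambda_j)z_j^{-1}-2\lambda_j^{g+1}-I_0\lambda_j^g}{B'(\lambda_j)}$ ($N$ even). Define: $B(\lambda)=b_0\prod_{j=1}^g(\lambda-\lambda_j)=b_0\lambda^g+b_1\lambda^{g-1}+\cdots+b_g$; for $\ell=1,\dots,g$, $I_\ell=-\sum_{j=1}^g\frac{z_j+Q(\lambda_j)z_j^{-1}-I_0\lambda_j^g}{B'(\lambda_j)}\frac{\partial b_\ell}{\partial\lambda_j}$ ($N$ odd), resp. with numerator $z_j+Q(\lambda_j)z_j^{-1}-2\lambda_j^{g+1}-I_0\lambda_j^g$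 ($N$ even); $P(\lambda)=I_0\lambda^g+\sum_{\ell=1}^gI_\ell\lambda^{g-\ell}$ ($N$ odd), resp. $P(\lambda)=2\lambda^{g+1}+I_0\lambda^g+\sum_{\ell=1}^g I_\ell\lambda^{g-\ell}$ ($N$ even); $A(\lambda)$ the unique polynomial of the form $a_0\lambda^g+a_1\lambda^{g-1}+\cdots+a_g$ with $a_0=I_0/2$ ($N$ odd), resp. $\lambda^{g+1}+a_0\lambda^g+\cdots+a_g$ with $a_0=\frac12(I_0-\frac{\alpha}{2})$ ($N$ even), such that $A(\lambda_j)=z_j$ for all $j$; $D(\lambda)=P(\lambda)-A(\lambda)$; $C(\lambda)=(A(\lambda)D(\lambda)-Q(\lambda))/B(\lambda)$. Then $C(\lambda)$ is a polynomial, $C(\lambda)=c_0\lambda^{g+1}+c_1\lambda^g+\cdots$, and with $u_1=-\dot a_0+c_1-b_1$ ($N$ odd), resp. $u_1=(-\dot a_0+c_1-b_1)/b_0$ ($N$ even), the functions satisfy $\dot A=C-B(\lambda+u_1)$, $\dot B=D-A$, $\dot C=(\lambda+\alpha+u_1)A-D(\lambda+u_1)$, $\dot D=(\lambda+\alpha+u_1)B-C$; i.e. $T(\lambda)=\begin{pmatrix}A&B\\C&D\end{pmatrix}$ satisfies $\dot T(\lambda)=U_1(\lambda+\alpha)T(\lambda)-T(\lambda)U_1(\lambda)$ with $U_1(\lambda)=\begin{pmatrix}0&1\\ \lambda+u_1&0\end{pmatrix}$.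
   Context: Dot denotes $d/dx$; $B'(\lambda_j)=b_0\prod_{k\ne j}(\lambda_j-\lambda_k)$, and the coefficients $b_\ell$ of $B$ are regarded as functions of $\lambda_1,\dots,\lambda_g$ (and $b_0$). This is the reconstruction of the transition matrix of the periodic dressing chain (whose Lax equation is $\dot T=U_1(\lambda+\alpha)T-TU_1(\lambda)$) from its spectral Hamiltonian system. *)

theory Defs
  imports "HOL-Analysis.Analysis" "HOL-Computational_Algebra.Polynomial"
begin

text \<open>Periodic dressing chain with period N, N = 2g+1 or N = 2g+2.
 Indices: alpha_n for n = 1..N; lambda_j, z_j for j = 0..g-1 (0-based).\<close>

definition alpha_tot :: "nat \<Rightarrow> (nat \<Rightarrow> complex) \<Rightarrow> complex" where
  "alpha_tot N al = (\<Sum>n=1..N. al n)"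

definition betaN :: "(nat \<Rightarrow> complex) \<Rightarrow> nat \<Rightarrow> complex" where
  "betaN al n = (\<Sum>k=1..n. al k)"

definition Qpoly :: "nat \<Rightarrow> (nat \<Rightarrow> complex) \<Rightarrow> complex poly" where
  "Qpoly N al = smult ((-1)^N) ([:0, 1:] * (\<Prod>n\<in>{1..N-1}. [:betaN al n, 1:]))"

definition b0fun :: "nat \<Rightarrow> complex \<Rightarrow> complex" where
  "b0fun N v = (if odd N then 1 else v)"

definition I0fun :: "nat \<Rightarrow> nat \<Rightarrow> (nat \<Rightarrow> complex) \<Rightarrow> complex \<Rightarrow> complex" where
  "I0fun N g al v = (if odd N then 2 * v else v^2 + (\<Sum>n=1..2*g+1. betaN al n))"

definition Bpoly :: "nat \<Rightarrow> complex \<Rightarrow> (nat \<Rightarrow> complex) \<Rightarrow> complex poly" where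
  "Bpoly g b0 lam = smult b0 (\<Prod>j<g. [:- lam j, 1:])"

definition bcoef :: "nat \<Rightarrow> complex \<Rightarrow> (nat \<Rightarrow> complex) \<Rightarrow> nat \<Rightarrow> complex" where
  "bcoef g b0 lam l = coeff (Bpoly g b0 lam) (g - l)"

definition Bprime :: "nat \<Rightarrow> complex \<Rightarrow> (nat \<Rightarrow> complex) \<Rightarrow> nat \<Rightarrow> complex" where
  "Bprime g b0 lam j = b0 * (\<Prod>k\<in>{..<g} - {j}. lam j - lam k)"

definition numer :: "nat \<Rightarrow> nat \<Rightarrow> (nat \<Rightarrow> complex) \<Rightarrow> complex \<Rightarrow> (nat \<Rightarrow> complex)
    \<Rightarrow> (nat \<Rightarrow> complex) \<Rightarrow> nat \<Rightarrow> complex" where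
  "numer N g al I0 lam z j =
     z j + poly (Qpoly N al) (lam j) / z j
     - (if odd N then 0 else 2 * lam j ^ (g+1)) - I0 * lam j ^ g"

definition Ham :: "nat \<Rightarrow> nat \<Rightarrow> (nat \<Rightarrow> complex) \<Rightarrow> complex \<Rightarrow> complex \<Rightarrow> (nat \<Rightarrow> complex)
    \<Rightarrow> (nat \<Rightarrow> complex) \<Rightarrow> complex" where
  "Ham N g al b0 I0 lam z = (\<Sum>j<g. numer N g al I0 lam z j / Bprime g b0 lam j)"

definition dH_dz :: "nat \<Rightarrow> nat \<Rightarrow> (nat \<Rightarrow> complex) \<Rightarrow> complex \<Rightarrow> complex \<Rightarrow> (nat \<Rightarrow> complex)
    \<Rightarrow> (nat \<Rightarrow> complex) \<Rightarrow> nat \<Rightarrow> complex" where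
  "dH_dz N g al b0 I0 lam z j = deriv (\<lambda>t. Ham N g al b0 I0 lam (z(j := t))) (z j)"

definition dH_dlam :: "nat \<Rightarrow> nat \<Rightarrow> (nat \<Rightarrow> complex) \<Rightarrow> complex \<Rightarrow> complex \<Rightarrow> (nat \<Rightarrow> complex)
    \<Rightarrow> (nat \<Rightarrow> complex) \<Rightarrow> nat \<Rightarrow> complex" where
  "dH_dlam N g al b0 I0 lam z j = deriv (\<lambda>t. Ham N g al b0 I0 (lam(j := t)) z) (lam j)"

definition Icoef :: "nat \<Rightarrow> nat \<Rightarrow> (nat \<Rightarrow> complex) \<Rightarrow> complex \<Rightarrow> complex \<Rightarrow> (nat \<Rightarrow> complex)
    \<Rightarrow> (nat \<Rightarrow> complex) \<Rightarrow> nat \<Rightarrow> complex" where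
  "Icoef N g al b0 I0 lam z l =
     - (\<Sum>j<g. numer N g al I0 lam z j / Bprime g b0 lam j
                * deriv (\<lambda>t. bcoef g b0 (lam(j := t)) l) (lam j))"

definition Ppoly :: "nat \<Rightarrow> nat \<Rightarrow> (nat \<Rightarrow> complex) \<Rightarrow> complex \<Rightarrow> complex \<Rightarrow> (nat \<Rightarrow> complex)
    \<Rightarrow> (nat \<Rightarrow> complex) \<Rightarrow> complex poly" where
  "Ppoly N g al b0 I0 lam z =
     (if odd N then 0 else monom 2 (g+1)) + monom I0 g
     + (\<Sum>l=1..g. monom (Icoef N g al b0 I0 lam z l) (g - l))"

definition Apoly :: "nat \<Rightarrow> nat \<Rightarrow> (nat \<Rightarrow> complex) \<Rightarrow> complex \<Rightarrow> (nat \<Rightarrow> complex)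
    \<Rightarrow> (nat \<Rightarrow> complex) \<Rightarrow> complex poly" where
  "Apoly N g al I0 lam z = (THE p.
     (if odd N then degree p \<le> g \<and> coeff p g = I0 / 2
      else degree p \<le> g + 1 \<and> coeff p (g+1) = 1 \<and> coeff p g = (I0 - alpha_tot N al / 2) / 2)
     \<and> (\<forall>j<g. poly p (lam j) = z j))"

definition Bx :: "nat \<Rightarrow> nat \<Rightarrow> (real \<Rightarrow> complex) \<Rightarrow> (real \<Rightarrow> nat \<Rightarrow> complex) \<Rightarrow> real \<Rightarrow> complex poly" where
  "Bx N g v lam x = Bpoly g (b0fun N (v x)) (lam x)"

definition Ax :: "nat \<Rightarrow> nat \<Rightarrow> (nat \<Rightarrow> complex) \<Rightarrow> (real \<Rightarrow> complex) \<Rightarrow> (real \<Rightarrow> nat \<Rightarrow> complex)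
    \<Rightarrow> (real \<Rightarrow> nat \<Rightarrow> complex) \<Rightarrow> real \<Rightarrow> complex poly" where
  "Ax N g al v lam z x = Apoly N g al (I0fun N g al (v x)) (lam x) (z x)"

definition Px :: "nat \<Rightarrow> nat \<Rightarrow> (nat \<Rightarrow> complex) \<Rightarrow> (real \<Rightarrow> complex) \<Rightarrow> (real \<Rightarrow> nat \<Rightarrow> complex)
    \<Rightarrow> (real \<Rightarrow> nat \<Rightarrow> complex) \<Rightarrow> real \<Rightarrow> complex poly" where
  "Px N g al v lam z x = Ppoly N g al (b0fun N (v x)) (I0fun N g al (v x)) (lam x) (z x)"

definition Dx :: "nat \<Rightarrow> nat \<Rightarrow> (nat \<Rightarrow> complex) \<Rightarrow> (real \<Rightarrow> complex) \<Rightarrow> (real \<Rightarrow> nat \<Rightarrow> complex)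
    \<Rightarrow> (real \<Rightarrow> nat \<Rightarrow> complex) \<Rightarrow> real \<Rightarrow> complex poly" where
  "Dx N g al v lam z x = Px N g al v lam z x - Ax N g al v lam z x"

text \<open>C = (A D - Q) / B (exact division when B divides A D - Q)\<close>
definition Cx :: "nat \<Rightarrow> nat \<Rightarrow> (nat \<Rightarrow> complex) \<Rightarrow> (real \<Rightarrow> complex) \<Rightarrow> (real \<Rightarrow> nat \<Rightarrow> complex)
    \<Rightarrow> (real \<Rightarrow> nat \<Rightarrow> complex) \<Rightarrow> real \<Rightarrow> complex poly" where
  "Cx N g al v lam z x =
     (Ax N g al v lam z x * Dx N g al v lam z x - Qpoly N al) div Bx N g v lam x"

definition u1x :: "nat \<Rightarrow> nat \<Rightarrow> (nat \<Rightarrow> complex) \<Rightarrow> (real \<Rightarrow> complex) \<Rightarrow> (real \<Rightarrow> nat \<Rightarrow> complex)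
    \<Rightarrow> (real \<Rightarrow> nat \<Rightarrow> complex) \<Rightarrow> real \<Rightarrow> complex" where
  "u1x N g al v lam z x =
     (- vector_derivative (\<lambda>y. coeff (Ax N g al v lam z y) g) (at x)
      + coeff (Cx N g al v lam z x) g - coeff (Bx N g v lam x) (g - 1))
     / (if odd N then 1 else b0fun N (v x))"

end

theory Submission
  imports Defs
begin

definition Lag :: "(nat \<Rightarrow> complex) \<Rightarrow> nat set \<Rightarrow> nat \<Rightarrow> complex poly" where
  "Lag xs I k = smult (1 / (\<Prod>i\<in>I-{k}. xs k - xs i)) (\<Prod>i\<in>I-{k}. [:- xs i, 1:])"

lemma poly_Lag: "poly (Lag xs I k) w = (\<Prod>i\<in>I-{k}. w - xs i) / (\<Prod>i\<in>I-{k}. xs k - xs i)"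
  by (simp add: Lag_def poly_prod)

lemma poly_Lag_same:
  assumes "finite I" "inj_on xs I" "k \<in> I"
  shows "poly (Lag xs I k) (xs k) = 1"
proof -
  have "(\<Prod>i\<in>I-{k}. xs k - xs i) \<noteq> 0"
    using assms by (auto simp: prod_zero_iff inj_on_def)
  then show ?thesis by (simp add: poly_Lag)
qed

lemma poly_Lag_other:
  assumes "finite I" "i \<in> I" "i \<noteq> k"
  shows "poly (Lag xs I k) (xs i) = 0"
  using assms by (auto simp: poly_Lag prod_zero_iff)

lemma degree_prod_lin:
  assumes "finite J"
  shows "degree (\<Prod>i\<in>J. [:- xs i, 1::complex:]) \<le> card J"
proof -
  have "degree (\<Prod>i\<in>J. [:- xs i, 1::complex:]) \<le> sum (degree \<circ> (\<lambda>i. [:- xs i, 1::complex:])) J"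
    by (rule degree_prod_sum_le[OF assms])
  also have "\<dots> = card J" by simp
  finally show ?thesis .
qed

lemma degree_Lag:
  assumes "finite I" "k \<in> I"
  shows "degree (Lag xs I k) \<le> card I - 1"
proof -
  have "degree (Lag xs I k) \<le> degree (\<Prod>i\<in>I-{k}. [:- xs i, 1::complex:])"
    by (simp add: Lag_def)
  also have "\<dots> \<le> card (I - {k})" using assms by (intro degree_prod_lin) auto
  also have "\<dots> \<le> card I - 1"
    using assms by (auto simp: card_Diff_singleton)
  finally show ?thesis .
qed

lemma poly_zero_roots:
  fixes p :: "complex poly"
  assumes "finite I" "inj_on xs I" "degree p < card I" "\<forall>i\<in>I. poly p (xs i) = 0"
  shows "p = 0"
proof (rule ccontr)
  assume "p \<noteq> 0"
  have "xs ` I \<subseteq> {x. poly p x = 0}" using assms by auto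
  then have "card (xs ` I) \<le> card {x. poly p x = 0}"
    by (intro card_mono poly_roots_finite \<open>p \<noteq> 0\<close>)
  also have "\<dots> \<le> degree p" by (rule card_poly_roots_bound[OF \<open>p \<noteq> 0\<close>])
  finally show False using assms card_image[OF assms(2)] by simp
qed

lemma interp:
  fixes p :: "complex poly"
  assumes "finite I" "inj_on xs I" "degree p < card I"
  shows "p = (\<Sum>k\<in>I. smult (poly p (xs k)) (Lag xs I k))"
proof -
  define q where "q = (\<Sum>k\<in>I. smult (poly p (xs k)) (Lag xs I k))"
  have dq: "degree q \<le> card I - 1"
    unfolding q_def
    by (rule degree_sum_le[OF assms(1)]) (meson assms(1) degree_Lag degree_smult_le order.trans)
  have "degree (p - q) < card I"
    using degree_diff_le[of p "card I - 1" q] dq assms(3) by linarith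
  moreover have "\<forall>i\<in>I. poly (p - q) (xs i) = 0"
  proof
    fix i assume i: "i \<in> I"
    have "poly q (xs i) = (\<Sum>k\<in>I. poly p (xs k) * poly (Lag xs I k) (xs i))"
      by (simp add: q_def poly_sum)
    also have "\<dots> = poly p (xs i) * poly (Lag xs I i) (xs i)"
      by (rule sum.remove[OF assms(1) i, THEN trans])
         (auto intro!: sum.neutral simp: poly_Lag_other[OF assms(1)] i)
    also have "\<dots> = poly p (xs i)" using poly_Lag_same[OF assms(1,2) i] by simp
    finally show "poly (p - q) (xs i) = 0" by simp
  qed
  ultimately have "p - q = 0" using poly_zero_roots assms by blast
  then show ?thesis by (simp add: q_def)
qed

lemma poly_uniq:
  fixes p q :: "complex poly"
  assumes "finite I" "inj_on xs I" "card I = m" "m \<ge> 1"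
    "degree p \<le> n" "degree q \<le> n"
    "\<forall>i. m \<le> i \<longrightarrow> i \<le> n \<longrightarrow> coeff p i = coeff q i"
    "\<forall>k\<in>I. poly p (xs k) = poly q (xs k)"
  shows "p = q"
proof -
  have "degree (p - q) \<le> m - 1"
  proof (rule degree_le, intro allI impI)
    fix i assume "m - 1 < i"
    show "coeff (p - q) i = 0"
    proof (cases "i \<le> n")
      case True then show ?thesis using assms(4,7) \<open>m - 1 < i\<close> by auto
    next
      case False then show ?thesis using assms(5,6) by (simp add: coeff_eq_0)
    qed
  qed
  then have "degree (p - q) < card I" using assms(3,4) by linarith
  then have "p - q = 0" using poly_zero_roots[OF assms(1,2), of "p - q"] assms(8) by auto
  then show ?thesis by simp
qed

section \<open>Pointwise derivatives of polynomial-valued functions\<close>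

definition PD :: "(real \<Rightarrow> complex poly) \<Rightarrow> complex poly \<Rightarrow> real \<Rightarrow> bool" where
  "PD p p' x \<longleftrightarrow> (\<forall>\<mu>. ((\<lambda>y. poly (p y) \<mu>) has_vector_derivative poly p' \<mu>) (at x))"

lemma PD_unique:
  assumes "PD p a x" "PD p b x" shows "a = b"
proof -
  have "poly a = poly b"
  proof
    fix \<mu> show "poly a \<mu> = poly b \<mu>"
      using assms unfolding PD_def by (meson vector_derivative_unique_at)
  qed
  then show ?thesis by (simp add: poly_eq_poly_eq_iff)
qed

lemma PD_add: "PD p a x \<Longrightarrow> PD q b x \<Longrightarrow> PD (\<lambda>y. p y + q y) (a + b) x"
  unfolding PD_def by (simp add: has_vector_derivative_add)

lemma PD_diff: "PD p a x \<Longrightarrow> PD q b x \<Longrightarrow> PD (\<lambda>y. p y - q y) (a - b) x"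
  unfolding PD_def by (simp add: has_vector_derivative_diff)

lemma PD_mult:
  assumes "PD p a x" "PD q b x" shows "PD (\<lambda>y. p y * q y) (p x * b + a * q x) x"
  unfolding PD_def poly_mult poly_add
proof
  fix \<mu>
  show "((\<lambda>y. poly (p y) \<mu> * poly (q y) \<mu>) has_vector_derivative poly (p x) \<mu> * poly b \<mu> + poly a \<mu> * poly (q x) \<mu>) (at x)"
    using has_vector_derivative_mult[OF assms(1)[unfolded PD_def, rule_format, of \<mu>] assms(2)[unfolded PD_def, rule_format, of \<mu>]]
    by simp
qed

lemma PD_const: "PD (\<lambda>y. c) 0 x"
  unfolding PD_def by simp

lemma PD_transform:
  assumes "PD p a x" "open T" "x \<in> T" "\<And>y. y \<in> T \<Longrightarrow> p y = q y" shows "PD q a x"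
  unfolding PD_def
proof
  fix \<mu> show "((\<lambda>y. poly (q y) \<mu>) has_vector_derivative poly a \<mu>) (at x)"
    by (rule has_vector_derivative_transform_within_open[where f="\<lambda>y. poly (p y) \<mu>", OF _ assms(2,3)])
       (use assms(1) assms(4) in \<open>auto simp: PD_def\<close>)
qed

lemma pderiv_sum: "pderiv (\<Sum>k\<in>I. f k) = (\<Sum>k\<in>I. pderiv (f k))"
  using higher_pderiv_sum[of 1 f I] by simp

lemma L_main:
  fixes p :: "real \<Rightarrow> complex poly" and nd :: "nat \<Rightarrow> complex"
  assumes T: "open T" "x \<in> T" and deg: "\<forall>y\<in>T. degree (p y) \<le> n"
    and I: "finite I" "inj_on nd I" "card I = n + 1"
    and dif: "\<forall>k\<in>I. (\<lambda>y. poly (p y) (nd k)) differentiable (at x)"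
  shows "\<exists>p'. PD p p' x \<and> degree p' \<le> n
     \<and> (\<forall>i. ((\<lambda>y. coeff (p y) i) has_vector_derivative coeff p' i) (at x))
     \<and> (\<forall>s s'. (s has_vector_derivative s') (at x) \<longrightarrow>
          ((\<lambda>y. poly (p y) (s y)) has_vector_derivative poly p' (s x) + poly (pderiv (p x)) (s x) * s') (at x))"
proof -
  define d where "d k = vector_derivative (\<lambda>y. poly (p y) (nd k)) (at x)" for k
  have dk: "((\<lambda>y. poly (p y) (nd k)) has_vector_derivative d k) (at x)" if "k \<in> I" for k
    using dif that vector_derivative_works unfolding d_def by blast
  define p' where "p' = (\<Sum>k\<in>I. smult (d k) (Lag nd I k))"
  have rep: "p y = (\<Sum>k\<in>I. smult (poly (p y) (nd k)) (Lag nd I k))" if "y \<in> T" for y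
  proof -
    have "degree (p y) < card I" using deg that I(3) by auto
    then show ?thesis using interp[OF I(1,2)] by blast
  qed
  have PDp: "PD p p' x"
    unfolding PD_def
  proof
    fix \<mu>
    have "((\<lambda>y. \<Sum>k\<in>I. poly (p y) (nd k) * poly (Lag nd I k) \<mu>) has_vector_derivative
           (\<Sum>k\<in>I. d k * poly (Lag nd I k) \<mu>)) (at x)"
      by (rule has_vector_derivative_sum, rule has_vector_derivative_mult_left, rule dk)
    then have "((\<lambda>y. \<Sum>k\<in>I. poly (p y) (nd k) * poly (Lag nd I k) \<mu>) has_vector_derivative
           poly p' \<mu>) (at x)"
      by (simp add: p'_def poly_sum)
    then show "((\<lambda>y. poly (p y) \<mu>) has_vector_derivative poly p' \<mu>) (at x)"
    proof (rule has_vector_derivative_transform_within_open[OF _ T])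
      fix y assume "y \<in> T"
      then show "(\<Sum>k\<in>I. poly (p y) (nd k) * poly (Lag nd I k) \<mu>) = poly (p y) \<mu>"
        using arg_cong[OF rep[OF \<open>y \<in> T\<close>], of "\<lambda>q. poly q \<mu>"] by (simp add: poly_sum)
    qed
  qed
  have degp': "degree p' \<le> n"
    unfolding p'_def
  proof (rule degree_sum_le[OF I(1)])
    fix k assume "k \<in> I"
    then have "degree (Lag nd I k) \<le> n" using degree_Lag[OF I(1)] I(3) by fastforce
    then show "degree (smult (d k) (Lag nd I k)) \<le> n" using degree_smult_le order.trans by blast
  qed
  have coef: "((\<lambda>y. coeff (p y) i) has_vector_derivative coeff p' i) (at x)" for i
  proof -
    have "((\<lambda>y. \<Sum>k\<in>I. poly (p y) (nd k) * coeff (Lag nd I k) i) has_vector_derivative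
           (\<Sum>k\<in>I. d k * coeff (Lag nd I k) i)) (at x)"
      by (rule has_vector_derivative_sum, rule has_vector_derivative_mult_left, rule dk)
    then have "((\<lambda>y. \<Sum>k\<in>I. poly (p y) (nd k) * coeff (Lag nd I k) i) has_vector_derivative
           coeff p' i) (at x)"
      by (simp add: p'_def coeff_sum)
    then show ?thesis
    proof (rule has_vector_derivative_transform_within_open[OF _ T])
      fix y assume "y \<in> T"
      then show "(\<Sum>k\<in>I. poly (p y) (nd k) * coeff (Lag nd I k) i) = coeff (p y) i"
        using arg_cong[OF rep[OF \<open>y \<in> T\<close>], of "\<lambda>q. coeff q i"] by (simp add: coeff_sum)
    qed
  qed
  have chain: "((\<lambda>y. poly (p y) (s y)) has_vector_derivative poly p' (s x) + poly (pderiv (p x)) (s x) * s') (at x)"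
    if s: "(s has_vector_derivative s') (at x)" for s s'
  proof -
    have Ls: "((\<lambda>y. poly (Lag nd I k) (s y)) has_vector_derivative s' * poly (pderiv (Lag nd I k)) (s x)) (at x)" for k
      using field_vector_diff_chain_at[OF s poly_DERIV] by (simp add: o_def)
    have "((\<lambda>y. \<Sum>k\<in>I. poly (p y) (nd k) * poly (Lag nd I k) (s y)) has_vector_derivative
           (\<Sum>k\<in>I. poly (p x) (nd k) * (s' * poly (pderiv (Lag nd I k)) (s x)) + d k * poly (Lag nd I k) (s x))) (at x)"
      by (rule has_vector_derivative_sum, rule has_vector_derivative_mult, rule dk, assumption, rule Ls)
    moreover have "(\<Sum>k\<in>I. poly (p x) (nd k) * (s' * poly (pderiv (Lag nd I k)) (s x)) + d k * poly (Lag nd I k) (s x))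
        = poly p' (s x) + poly (pderiv (p x)) (s x) * s'"
    proof -
      have "poly (pderiv (p x)) (s x) = (\<Sum>k\<in>I. poly (p x) (nd k) * poly (pderiv (Lag nd I k)) (s x))"
        by (subst rep[OF T(2)]) (simp add: pderiv_sum pderiv_smult poly_sum)
      then show ?thesis
        by (simp add: p'_def poly_sum sum.distrib sum_distrib_left sum_distrib_right algebra_simps)
    qed
    ultimately have "((\<lambda>y. \<Sum>k\<in>I. poly (p y) (nd k) * poly (Lag nd I k) (s y)) has_vector_derivative
           poly p' (s x) + poly (pderiv (p x)) (s x) * s') (at x)" by simp
    then show ?thesis
    proof (rule has_vector_derivative_transform_within_open[OF _ T])
      fix y assume "y \<in> T"
      then show "(\<Sum>k\<in>I. poly (p y) (nd k) * poly (Lag nd I k) (s y)) = poly (p y) (s y)"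
        using arg_cong[OF rep[OF \<open>y \<in> T\<close>], of "\<lambda>q. poly q (s y)"] by (simp add: poly_sum)
    qed
  qed
  show ?thesis using PDp degp' coef chain by blast
qed


definition Rpoly :: "nat \<Rightarrow> nat \<Rightarrow> complex \<Rightarrow> complex poly" where
  "Rpoly N g I0 = (if odd N then 0 else monom 2 (g+1)) + monom I0 g"

definition Prr :: "nat \<Rightarrow> (nat \<Rightarrow> complex) \<Rightarrow> nat \<Rightarrow> complex poly" where
  "Prr g lam j = (\<Prod>i\<in>{..<g}-{j}. [:- lam i, 1:])"

definition Pexp :: "nat \<Rightarrow> nat \<Rightarrow> (nat \<Rightarrow> complex) \<Rightarrow> complex \<Rightarrow> (nat \<Rightarrow> complex)
    \<Rightarrow> (nat \<Rightarrow> complex) \<Rightarrow> complex poly" where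
  "Pexp N g al I0 lam z = Rpoly N g I0 + (\<Sum>j<g. smult (numer N g al I0 lam z j) (Lag lam {..<g} j))"

lemma smult_sum2: "smult c (sum f A) = (\<Sum>i\<in>A. smult c (f i))"
  by (induct A rule: infinite_finite_induct) (simp_all add: smult_add_right)

lemma degree_Prr: assumes "j < g" shows "degree (Prr g lam j) \<le> g - 1"
proof -
  have "degree (Prr g lam j) \<le> card ({..<g}-{j})"
    unfolding Prr_def by (rule degree_prod_lin) auto
  also have "\<dots> \<le> g - 1" using assms by (auto simp: card_Diff_singleton)
  finally show ?thesis .
qed

lemma Bpoly_upd:
  assumes "j < g"
  shows "Bpoly g b0 (lam(j:=t)) = smult b0 (smult (- t) (Prr g lam j) + pCons 0 (Prr g lam j))"
proof -
  have "(\<Prod>i<g. [:- (lam(j:=t)) i, 1:]) = [:- (lam(j:=t)) j, 1:] * (\<Prod>i\<in>{..<g}-{j}. [:- (lam(j:=t)) i, 1:])"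
    using assms by (subst prod.remove[of "{..<g}" j]) auto
  also have "(\<Prod>i\<in>{..<g}-{j}. [:- (lam(j:=t)) i, 1:]) = Prr g lam j"
    unfolding Prr_def by (rule prod.cong) auto
  finally show ?thesis by (simp add: Bpoly_def)
qed

lemma deriv_bcoef:
  assumes "j < g"
  shows "deriv (\<lambda>t. bcoef g b0 (lam(j := t)) l) (lam j) = - b0 * coeff (Prr g lam j) (g - l)"
proof -
  have eq: "(\<lambda>t. bcoef g b0 (lam(j := t)) l) =
      (\<lambda>t. b0 * (- t * coeff (Prr g lam j) (g - l) + coeff (pCons 0 (Prr g lam j)) (g - l)))"
    by (rule ext) (simp add: bcoef_def Bpoly_upd[OF assms] del: coeff_pCons)
  show ?thesis unfolding eq
    by (rule DERIV_imp_deriv) (auto intro!: derivative_eq_intros)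
qed

lemma sum_monom_rev:
  assumes "g \<ge> 1"
  shows "(\<Sum>l=1..g. monom (h (g - l)) (g - l)) = (\<Sum>m<g. monom (h m) m)"
  by (rule sum.reindex_bij_witness[where i="\<lambda>m. g - m" and j="\<lambda>l. g - l"]) auto

lemma Ppoly_eq:
  assumes g1: "g \<ge> 1" and b0: "b0 \<noteq> 0"
  shows "Ppoly N g al b0 I0 lam z = Pexp N g al I0 lam z"
proof -
  define c where "c j = numer N g al I0 lam z j / Bprime g b0 lam j * b0" for j
  have Ic: "Icoef N g al b0 I0 lam z l = (\<Sum>j<g. c j * coeff (Prr g lam j) (g - l))" for l
    by (simp add: Icoef_def deriv_bcoef c_def sum_negf[symmetric] mult.assoc)
  have "(\<Sum>l=1..g. monom (Icoef N g al b0 I0 lam z l) (g - l))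
      = (\<Sum>m<g. monom (\<Sum>j<g. c j * coeff (Prr g lam j) m) m)"
    unfolding Ic by (rule sum_monom_rev[OF g1])
  also have "\<dots> = (\<Sum>j<g. smult (c j) (\<Sum>m<g. monom (coeff (Prr g lam j) m) m))"
    by (simp add: smult_sum2 smult_monom monom_sum[symmetric] sum.swap[of _ "{..<g}" "{..<g}"])
  also have "\<dots> = (\<Sum>j<g. smult (c j) (Prr g lam j))"
  proof (rule sum.cong[OF refl])
    fix j assume "j \<in> {..<g}"
    have "{..<g} = {..g-1}" using g1 by auto
    then have "(\<Sum>m<g. monom (coeff (Prr g lam j) m) m) = (\<Sum>m\<le>g-1. monom (coeff (Prr g lam j) m) m)"
      by simp
    also have "\<dots> = Prr g lam j"
      using \<open>j \<in> {..<g}\<close> by (intro poly_as_sum_of_monoms' degree_Prr) simp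
    finally have "(\<Sum>m<g. monom (coeff (Prr g lam j) m) m) = Prr g lam j" .
    then show "smult (c j) (\<Sum>m<g. monom (coeff (Prr g lam j) m) m) = smult (c j) (Prr g lam j)" by simp
  qed
  also have "\<dots> = (\<Sum>j<g. smult (numer N g al I0 lam z j) (Lag lam {..<g} j))"
    by (rule sum.cong[OF refl]) (simp add: c_def Lag_def Bprime_def Prr_def b0)
  finally show ?thesis
    by (simp add: Ppoly_def Pexp_def Rpoly_def)
qed


lemma dHz:
  assumes "j < g" "z j \<noteq> 0"
  shows "dH_dz N g al b0 I0 lam z j = (1 - poly (Qpoly N al) (lam j) / (z j)^2) / Bprime g b0 lam j"
proof -
  define q where "q = poly (Qpoly N al) (lam j)"
  define W where "W = Bprime g b0 lam j"
  have trm: "((\<lambda>t. numer N g al I0 lam (z(j:=t)) k / Bprime g b0 lam k) has_field_derivative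
      (if k = j then (1 - q / (z j)^2) / W else 0)) (at (z j))" for k
  proof (cases "k = j")
    case True
    have eq: "(\<lambda>t. numer N g al I0 lam (z(j:=t)) k / Bprime g b0 lam k) =
        (\<lambda>t. (t + q / t - ((if odd N then 0 else 2 * lam j ^ (g+1)) + I0 * lam j ^ g)) / W)"
      by (rule ext) (simp add: True numer_def q_def W_def)
    show ?thesis unfolding eq if_P[OF True]
      by (rule DERIV_cdivide) (use assms(2) in \<open>auto intro!: derivative_eq_intros simp: field_simps power2_eq_square\<close>)
  next
    case False
    have eq: "(\<lambda>t. numer N g al I0 lam (z(j:=t)) k / Bprime g b0 lam k) =
        (\<lambda>t. numer N g al I0 lam z k / Bprime g b0 lam k)"
      by (rule ext) (simp add: False numer_def)
    show ?thesis unfolding eq using False by simp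
  qed
  have "((\<lambda>t. Ham N g al b0 I0 lam (z(j:=t))) has_field_derivative
      (\<Sum>k<g. if k = j then (1 - q / (z j)^2) / W else 0)) (at (z j))"
    unfolding Ham_def by (rule DERIV_sum) (rule trm)
  then have "((\<lambda>t. Ham N g al b0 I0 lam (z(j:=t))) has_field_derivative (1 - q / (z j)^2) / W) (at (z j))"
    using assms(1) by (simp add: sum.delta)
  then show ?thesis unfolding dH_dz_def q_def W_def by (rule DERIV_imp_deriv)
qed

lemma prod_remove_nat:
  assumes "k \<in> A" "finite A"
  shows "(\<Prod>i\<in>A. f i) = f k * (\<Prod>i\<in>A-{k}. f i)"
  using prod.remove[OF assms(2,1)] .

lemma dHlam:
  assumes jg: "j < g" and inj: "inj_on lam {..<g}" and b0: "b0 \<noteq> 0" and zj: "z j \<noteq> 0"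
  shows "dH_dlam N g al b0 I0 lam z j =
    (poly (pderiv (Qpoly N al)) (lam j) / z j - poly (pderiv (Pexp N g al I0 lam z)) (lam j)) / Bprime g b0 lam j"
proof -
  define Q where "Q = Qpoly N al"
  define R where "R = Rpoly N g I0"
  define D where "D k = (\<Prod>i\<in>{..<g}-{k}. lam k - lam i)" for k
  define M where "M k = (\<Prod>i\<in>{..<g}-{k}-{j}. lam k - lam i)" for k
  define E where "E k = (\<Prod>i\<in>{..<g}-{k}-{j}. lam j - lam i)" for k
  define nm where "nm k = numer N g al I0 lam z k" for k
  define PP where "PP k = poly (pderiv (Prr g lam k)) (lam j)" for k
  have W: "Bprime g b0 lam k = b0 * D k" for k by (simp add: Bprime_def D_def)
  have Dnz: "D k \<noteq> 0" if "k < g" for k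
    using inj that by (auto simp: D_def prod_zero_iff inj_on_def)
  have Mnz: "M k \<noteq> 0" if "k < g" for k
    using inj that by (auto simp: M_def prod_zero_iff inj_on_def)
  have Enz: "E k \<noteq> 0" for k
    using inj jg by (auto simp: E_def prod_zero_iff inj_on_def)
  have Dk: "D k = (lam k - lam j) * M k" if "k < g" "k \<noteq> j" for k
    unfolding D_def M_def using that jg by (subst prod_remove_nat[of j]) auto
  have Dj: "D j = (lam j - lam k) * E k" if "k < g" "k \<noteq> j" for k
  proof -
    have "{..<g}-{j}-{k} = {..<g}-{k}-{j}" by auto
    then show ?thesis
      unfolding D_def E_def using that jg by (subst prod_remove_nat[of k]) auto
  qed
  have Djp: "D j = poly (Prr g lam j) (lam j)" by (simp add: D_def Prr_def poly_prod)
  have PPk: "PP k = E k" if "k < g" "k \<noteq> j" for k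
  proof -
    have "Prr g lam k = [:- lam j, 1:] * (\<Prod>i\<in>{..<g}-{k}-{j}. [:- lam i, 1:])"
      unfolding Prr_def using that jg by (subst prod_remove_nat[of j]) auto
    then have "PP k = poly ([:- lam j, 1:] * pderiv (\<Prod>i\<in>{..<g}-{k}-{j}. [:- lam i, 1:])
        + (\<Prod>i\<in>{..<g}-{k}-{j}. [:- lam i, 1:]) * pderiv [:- lam j, 1:]) (lam j)"
      unfolding PP_def by (simp only: pderiv_mult)
    also have "\<dots> = poly (\<Prod>i\<in>{..<g}-{k}-{j}. [:- lam i, 1:]) (lam j)"
      by (simp only: poly_mult poly_add) (simp add: pderiv_pCons)
    finally show ?thesis by (simp add: E_def poly_prod)
  qed
  have numj: "numer N g al I0 (lam(j:=t)) z j = z j + poly Q t / z j - poly R t" for t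
    by (simp add: numer_def Q_def R_def Rpoly_def poly_monom)
  have Bj: "Bprime g b0 (lam(j:=t)) j = b0 * poly (Prr g lam j) t" for t
    by (simp add: Bprime_def Prr_def poly_prod)
  have Bk: "Bprime g b0 (lam(j:=t)) k = b0 * ((lam k - t) * M k)" if "k < g" "k \<noteq> j" for k t
  proof -
    have "(\<Prod>i\<in>{..<g}-{k}. lam k - (lam(j:=t)) i) = (lam k - t) * (\<Prod>i\<in>{..<g}-{k}-{j}. lam k - (lam(j:=t)) i)"
      using that jg by (subst prod_remove_nat[of j]) auto
    also have "(\<Prod>i\<in>{..<g}-{k}-{j}. lam k - (lam(j:=t)) i) = M k"
      unfolding M_def by (rule prod.cong) auto
    finally show ?thesis using that by (simp add: Bprime_def)
  qed
  have numk: "numer N g al I0 (lam(j:=t)) z k = nm k" if "k \<noteq> j" for k t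
    using that by (simp add: numer_def nm_def)
  define Tj where "Tj = (poly (pderiv Q) (lam j) / z j - poly (pderiv R) (lam j) - nm j * PP j / D j) / (b0 * D j)"
  define Tk where "Tk k = - nm k * E k / (D k * (b0 * D j))" for k
  have trm: "((\<lambda>t. numer N g al I0 (lam(j:=t)) z k / Bprime g b0 (lam(j:=t)) k) has_field_derivative
      (if k = j then Tj else Tk k)) (at (lam j))" if "k \<in> {..<g}" for k
  proof (cases "k = j")
    case True
    have eq: "(\<lambda>t. numer N g al I0 (lam(j:=t)) z k / Bprime g b0 (lam(j:=t)) k) =
        (\<lambda>t. (z j + poly Q t / z j - poly R t) / (b0 * poly (Prr g lam j) t))"
      by (rule ext) (simp add: True numj Bj)
    have nmj: "nm j = z j + poly Q (lam j) / z j - poly R (lam j)"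
      using numj[of "lam j"] by (simp add: nm_def)
    have "((\<lambda>t. (z j + poly Q t / z j - poly R t) / (b0 * poly (Prr g lam j) t)) has_field_derivative
        ((poly (pderiv Q) (lam j) / z j - poly (pderiv R) (lam j)) * (b0 * poly (Prr g lam j) (lam j))
          - (z j + poly Q (lam j) / z j - poly R (lam j)) * (b0 * poly (pderiv (Prr g lam j)) (lam j)))
         / (b0 * poly (Prr g lam j) (lam j) * (b0 * poly (Prr g lam j) (lam j)))) (at (lam j))"
      by (rule DERIV_divide)
         (auto intro!: derivative_eq_intros poly_DERIV simp: Djp[symmetric] Dnz[OF jg] b0 zj)
    moreover have "((poly (pderiv Q) (lam j) / z j - poly (pderiv R) (lam j)) * (b0 * poly (Prr g lam j) (lam j))
          - (z j + poly Q (lam j) / z j - poly R (lam j)) * (b0 * poly (pderiv (Prr g lam j)) (lam j)))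
         / (b0 * poly (Prr g lam j) (lam j) * (b0 * poly (Prr g lam j) (lam j))) = Tj"
      unfolding Tj_def nmj[symmetric] Djp[symmetric] PP_def using Dnz[OF jg] b0
      by (simp add: field_simps)
    ultimately show ?thesis unfolding eq if_P[OF True] by simp
  next
    case False
    have kg: "k < g" using that by simp
    have eq: "(\<lambda>t. numer N g al I0 (lam(j:=t)) z k / Bprime g b0 (lam(j:=t)) k) =
        (\<lambda>t. nm k / (b0 * ((lam k - t) * M k)))"
      by (rule ext) (simp add: numk[OF False] Bk[OF kg False])
    have ne: "lam k - lam j \<noteq> 0" using inj kg jg False by (auto simp: inj_on_def)
    then have ne': "lam k \<noteq> lam j" by simp
    have "((\<lambda>t. nm k / (b0 * ((lam k - t) * M k))) has_field_derivative
        (0 * (b0 * ((lam k - lam j) * M k)) - nm k * (b0 * (- M k))) / (b0 * ((lam k - lam j) * M k) * (b0 * ((lam k - lam j) * M k)))) (at (lam j))"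
      by (rule DERIV_divide) (auto intro!: derivative_eq_intros simp: b0 ne ne' Mnz[OF kg])
    moreover have "(0 * (b0 * ((lam k - lam j) * M k)) - nm k * (b0 * (- M k))) / (b0 * ((lam k - lam j) * M k) * (b0 * ((lam k - lam j) * M k))) = Tk k"
    proof -
      have gen: "(0 * (b0 * (d * M k)) - nm k * (b0 * (- M k))) / (b0 * (d * M k) * (b0 * (d * M k)))
          = - nm k * E k / ((d * M k) * (b0 * ((- d) * E k)))" if "d \<noteq> 0" for d
        using b0 that Mnz[OF kg] Enz[of k] by (simp add: field_simps)
      have "lam j - lam k = - (lam k - lam j)" by simp
      then show ?thesis unfolding Tk_def Dk[OF kg False] Dj[OF kg False] using gen[OF ne] by simp
    qed
    ultimately show ?thesis unfolding eq if_not_P[OF False] by simp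
  qed
  have "((\<lambda>t. Ham N g al b0 I0 (lam(j:=t)) z) has_field_derivative
      (\<Sum>k<g. if k = j then Tj else Tk k)) (at (lam j))"
    unfolding Ham_def by (rule DERIV_sum) (rule trm)
  moreover have "(\<Sum>k<g. if k = j then Tj else Tk k) =
    (poly (pderiv (Qpoly N al)) (lam j) / z j - poly (pderiv (Pexp N g al I0 lam z)) (lam j)) / Bprime g b0 lam j"
  proof -
    have s1: "(\<Sum>k<g. if k = j then Tj else Tk k) = Tj + (\<Sum>k\<in>{..<g}-{j}. Tk k)"
      using jg by (subst sum.remove[of "{..<g}" j]) (auto intro!: sum.cong)
    have pl: "poly (pderiv (Lag lam {..<g} k)) (lam j) = PP k / D k" for k
      by (simp add: Lag_def pderiv_smult PP_def D_def Prr_def)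
    have pP: "poly (pderiv (Pexp N g al I0 lam z)) (lam j) =
        poly (pderiv R) (lam j) + (\<Sum>k<g. nm k * (PP k / D k))"
      by (simp add: Pexp_def R_def pderiv_add pderiv_sum pderiv_smult poly_sum pl nm_def)
    have s2: "(\<Sum>k<g. nm k * (PP k / D k)) = nm j * (PP j / D j) + (\<Sum>k\<in>{..<g}-{j}. nm k * (E k / D k))"
      using jg by (subst sum.remove[of "{..<g}" j]) (auto simp: PPk intro!: sum.cong)
    have s3: "(\<Sum>k\<in>{..<g}-{j}. Tk k) = - (\<Sum>k\<in>{..<g}-{j}. nm k * (E k / D k)) / (b0 * D j)"
      by (simp add: Tk_def sum_divide_distrib sum_negf[symmetric] field_simps)
    have "(\<Sum>k<g. if k = j then Tj else Tk k) = Tj - (\<Sum>k\<in>{..<g}-{j}. nm k * (E k / D k)) / (b0 * D j)"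
      using s1 s3 by simp
    also have "\<dots> = (poly (pderiv Q) (lam j) / z j - poly (pderiv (Pexp N g al I0 lam z)) (lam j)) / (b0 * D j)"
      unfolding pP s2 Tj_def using b0 Dnz[OF jg] by (simp add: field_simps)
    finally show ?thesis unfolding W Q_def .
  qed
  ultimately show ?thesis unfolding dH_dlam_def by (metis DERIV_imp_deriv)
qed


definition a0fun :: "nat \<Rightarrow> (nat \<Rightarrow> complex) \<Rightarrow> complex \<Rightarrow> complex" where
  "a0fun N al I0 = (if odd N then I0 / 2 else (I0 - alpha_tot N al / 2) / 2)"

definition Kpoly :: "nat \<Rightarrow> nat \<Rightarrow> (nat \<Rightarrow> complex) \<Rightarrow> complex \<Rightarrow> complex poly" where
  "Kpoly N g al I0 = (if odd N then 0 else monom 1 (g+1)) + monom (a0fun N al I0) g"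

definition Aexp :: "nat \<Rightarrow> nat \<Rightarrow> (nat \<Rightarrow> complex) \<Rightarrow> complex \<Rightarrow> (nat \<Rightarrow> complex)
    \<Rightarrow> (nat \<Rightarrow> complex) \<Rightarrow> complex poly" where
  "Aexp N g al I0 lam z = Kpoly N g al I0 +
     (\<Sum>j<g. smult (z j - poly (Kpoly N g al I0) (lam j)) (Lag lam {..<g} j))"

lemma degree_Lag_g:
  assumes "j < g" "g \<ge> 1"
  shows "degree (Lag lam {..<g} j) < g"
  using degree_Lag[of "{..<g}" j lam] assms by simp

lemma Lag_sum_props:
  assumes "g \<ge> 1"
  shows "degree (\<Sum>j<g. smult (c j) (Lag lam {..<g} j)) < g"
proof -
  have "degree (\<Sum>j<g. smult (c j) (Lag lam {..<g} j)) \<le> g - 1"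
  proof (rule degree_sum_le)
    fix j assume "j \<in> {..<g}"
    then have "degree (Lag lam {..<g} j) \<le> g - 1" using degree_Lag_g[OF _ assms, of j lam] by simp
    then show "degree (smult (c j) (Lag lam {..<g} j)) \<le> g - 1" using degree_smult_le order.trans by blast
  qed simp
  then show ?thesis using assms by linarith
qed

lemma Lag_sum_eval:
  assumes "inj_on lam {..<g}" "i < g"
  shows "poly (\<Sum>j<g. smult (c j) (Lag lam {..<g} j)) (lam i) = c i"
proof -
  have "poly (\<Sum>j<g. smult (c j) (Lag lam {..<g} j)) (lam i) = (\<Sum>j<g. c j * poly (Lag lam {..<g} j) (lam i))"
    by (simp add: poly_sum)
  also have "\<dots> = c i * poly (Lag lam {..<g} i) (lam i)"
    using assms(2) by (subst sum.remove[of _ i]) (auto intro!: sum.neutral simp: poly_Lag_other)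
  also have "\<dots> = c i" using poly_Lag_same[of "{..<g}" lam i] assms by simp
  finally show ?thesis .
qed

lemma coeff_big: "degree p < g \<Longrightarrow> g \<le> i \<Longrightarrow> coeff p i = 0"
  by (simp add: coeff_eq_0)

definition Aprop :: "nat \<Rightarrow> nat \<Rightarrow> (nat \<Rightarrow> complex) \<Rightarrow> complex \<Rightarrow> (nat \<Rightarrow> complex)
    \<Rightarrow> (nat \<Rightarrow> complex) \<Rightarrow> complex poly \<Rightarrow> bool" where
  "Aprop N g al I0 lam z p \<longleftrightarrow>
     (if odd N then degree p \<le> g \<and> coeff p g = I0 / 2
      else degree p \<le> g + 1 \<and> coeff p (g+1) = 1 \<and> coeff p g = (I0 - alpha_tot N al / 2) / 2)
     \<and> (\<forall>j<g. poly p (lam j) = z j)"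

lemma Aprop_D:
  assumes "Aprop N g al I0 lam z p"
  shows "coeff p g = a0fun N al I0" "coeff p (g+1) = (if odd N then 0 else 1)" "degree p \<le> g + 1"
    "\<And>j. j < g \<Longrightarrow> poly p (lam j) = z j"
  using assms by (auto simp: Aprop_def a0fun_def coeff_eq_0 split: if_splits)

lemma Aexp_props:
  assumes g1: "g \<ge> 1" and inj: "inj_on lam {..<g}"
  shows "Aprop N g al I0 lam z (Aexp N g al I0 lam z)"
proof -
  define K where "K = Kpoly N g al I0"
  define L where "L = (\<Sum>j<g. smult (z j - poly K (lam j)) (Lag lam {..<g} j))"
  have dL: "degree L < g" unfolding L_def by (rule Lag_sum_props[OF g1])
  have A: "Aexp N g al I0 lam z = K + L" by (simp add: Aexp_def K_def L_def)
  have dK: "degree K \<le> (if odd N then g else g + 1)"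
    by (auto simp: K_def Kpoly_def intro!: degree_add_le order.trans[OF degree_monom_le])
  have cg: "coeff (K + L) g = a0fun N al I0"
    using coeff_big[OF dL] by (simp add: K_def Kpoly_def)
  have cg1: "coeff (K + L) (g+1) = (if odd N then 0 else 1)"
    using coeff_big[OF dL, of "g+1"] by (simp add: K_def Kpoly_def)
  have dA: "degree (K + L) \<le> (if odd N then g else g + 1)"
    using dK dL by (intro degree_add_le) auto
  have ev: "poly (K + L) (lam j) = z j" if "j < g" for j
    using Lag_sum_eval[OF inj that] by (simp add: L_def)
  show ?thesis unfolding Aprop_def A using cg cg1 dA ev by (auto simp: a0fun_def)
qed

lemma Apoly_eq:
  assumes g1: "g \<ge> 1" and inj: "inj_on lam {..<g}"
  shows "Apoly N g al I0 lam z = Aexp N g al I0 lam z"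
proof -
  have P: "Aprop N g al I0 lam z (Aexp N g al I0 lam z)" by (rule Aexp_props[OF assms])
  have U: "p = Aexp N g al I0 lam z" if "Aprop N g al I0 lam z p" for p
  proof (rule poly_uniq[where I="{..<g}" and xs=lam and m=g and n="g+1"])
    show "degree p \<le> g + 1" using that by (auto simp: Aprop_def split: if_splits)
    show "degree (Aexp N g al I0 lam z) \<le> g + 1" using P by (auto simp: Aprop_def split: if_splits)
    show "\<forall>i. g \<le> i \<longrightarrow> i \<le> g + 1 \<longrightarrow> coeff p i = coeff (Aexp N g al I0 lam z) i"
    proof (intro allI impI)
      fix i assume "g \<le> i" "i \<le> g + 1"
      then consider "i = g" | "i = g + 1" by linarith
      then show "coeff p i = coeff (Aexp N g al I0 lam z) i"
      proof cases
        case 1 then show ?thesis using Aprop_D(1)[OF that] Aprop_D(1)[OF P] by simp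
      next
        case 2 then show ?thesis using Aprop_D(2)[OF that] Aprop_D(2)[OF P] by simp
      qed
    qed
    show "\<forall>k\<in>{..<g}. poly p (lam k) = poly (Aexp N g al I0 lam z) (lam k)"
      using that P by (auto simp: Aprop_def)
  qed (use g1 inj in auto)
  have "Apoly N g al I0 lam z = (THE p. Aprop N g al I0 lam z p)"
    by (simp add: Apoly_def Aprop_def)
  also have "\<dots> = Aexp N g al I0 lam z"
    using P U by (rule the_equality)
  finally show ?thesis .
qed

lemma Pexp_props:
  assumes g1: "g \<ge> 1" and inj: "inj_on lam {..<g}"
  shows "degree (Pexp N g al iz lam z) \<le> (if odd N then g else g + 1)"
    and "coeff (Pexp N g al iz lam z) g = iz"
    and "coeff (Pexp N g al iz lam z) (g+1) = (if odd N then 0 else 2)"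
    and "\<And>j. j < g \<Longrightarrow> poly (Pexp N g al iz lam z) (lam j) = z j + poly (Qpoly N al) (lam j) / z j"
proof -
  define L where "L = (\<Sum>j<g. smult (numer N g al iz lam z j) (Lag lam {..<g} j))"
  have dL: "degree L < g" unfolding L_def by (rule Lag_sum_props[OF g1])
  have P: "Pexp N g al iz lam z = Rpoly N g iz + L" by (simp add: Pexp_def L_def)
  have dR: "degree (Rpoly N g iz) \<le> (if odd N then g else g + 1)"
    by (auto simp: Rpoly_def intro!: degree_add_le order.trans[OF degree_monom_le])
  show "degree (Pexp N g al iz lam z) \<le> (if odd N then g else g + 1)"
    unfolding P using dR dL by (intro degree_add_le) auto
  show "coeff (Pexp N g al iz lam z) g = iz"
    unfolding P using coeff_big[OF dL] by (simp add: Rpoly_def)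
  show "coeff (Pexp N g al iz lam z) (g+1) = (if odd N then 0 else 2)"
    unfolding P using coeff_big[OF dL, of "g+1"] by (simp add: Rpoly_def)
  show "poly (Pexp N g al iz lam z) (lam j) = z j + poly (Qpoly N al) (lam j) / z j" if "j < g" for j
    unfolding P using Lag_sum_eval[OF inj that]
    by (simp add: L_def Rpoly_def numer_def poly_monom)
qed

lemma prod_lin_coeffs:
  fixes c :: "nat \<Rightarrow> complex"
  assumes "finite A" "A \<noteq> {}"
  shows "coeff (\<Prod>n\<in>A. [:c n, 1:]) (card A) = 1 \<and> degree (\<Prod>n\<in>A. [:c n, 1:]) = card A
     \<and> coeff (\<Prod>n\<in>A. [:c n, 1:]) (card A - 1) = (\<Sum>n\<in>A. c n)"
  using assms
proof (induction A rule: finite_ne_induct)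
  case (singleton x)
  then show ?case by simp
next
  case (insert a A)
  define P where "P = (\<Prod>n\<in>A. [:c n, 1:])"
  have eq0: "(\<Prod>n\<in>insert a A. [:c n, 1:]) = [:c a, 1:] * P"
    using insert.hyps by (simp add: P_def)
  have eq1: "[:c a, 1:] * P = smult (c a) P + pCons 0 P"
    by (simp add: mult_pCons_left)
  obtain m where m: "card A = Suc m" using insert.hyps card_0_eq by (cases "card A") blast+
  have c1: "coeff P (Suc m) = 1" and dP: "degree P = Suc m" and c2: "coeff P m = (\<Sum>n\<in>A. c n)"
    using insert.IH m by (auto simp: P_def)
  have ci: "card (insert a A) = Suc (Suc m)" using insert.hyps m by simp
  have t1: "coeff (smult (c a) P + pCons 0 P) (Suc (Suc m)) = 1"
    using c1 dP by (simp add: coeff_eq_0)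
  have t2: "degree (smult (c a) P + pCons 0 P) = Suc (Suc m)"
  proof (rule antisym)
    show "degree (smult (c a) P + pCons 0 P) \<le> Suc (Suc m)"
    proof (rule degree_add_le)
      show "degree (smult (c a) P) \<le> Suc (Suc m)" using dP degree_smult_le[of "c a" P] by linarith
      show "degree (pCons 0 P) \<le> Suc (Suc m)" using dP degree_pCons_le[of 0 P] by linarith
    qed
    show "Suc (Suc m) \<le> degree (smult (c a) P + pCons 0 P)"
      by (rule le_degree) (use t1 in simp)
  qed
  have t3: "coeff (smult (c a) P + pCons 0 P) (Suc m) = c a + (\<Sum>n\<in>A. c n)"
    using c1 c2 by simp
  have t4: "(\<Sum>n\<in>insert a A. c n) = c a + (\<Sum>n\<in>A. c n)"
    using insert.hyps by simp
  show ?case unfolding eq0 eq1 ci using t1 t2 t3 t4 by simp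
qed

lemma Q_props:
  assumes "N \<ge> 2"
  shows "degree (Qpoly N al) = N" "coeff (Qpoly N al) N = (-1)^N"
    "coeff (Qpoly N al) (N - 1) = (-1)^N * (\<Sum>n=1..N-1. betaN al n)"
proof -
  define P where "P = (\<Prod>n\<in>{1..N-1}. [:betaN al n, 1:])"
  have pc: "coeff P (N-1) = 1 \<and> degree P = N - 1 \<and> coeff P (N-1-1) = (\<Sum>n=1..N-1. betaN al n)"
    using prod_lin_coeffs[of "{1..N-1}" "betaN al"] assms by (simp add: P_def)
  have Q: "Qpoly N al = smult ((-1)^N) (pCons 0 P)" by (simp add: Qpoly_def P_def)
  have "P \<noteq> 0" using pc by auto
  then show "degree (Qpoly N al) = N" unfolding Q using pc assms by simp
  show "coeff (Qpoly N al) N = (-1)^N" unfolding Q using pc assms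
    by (cases N) auto
  obtain k where k: "N = Suc (Suc k)" using assms by (metis add_2_eq_Suc le_Suc_ex)
  have "coeff (Qpoly N al) (N - 1) = (-1)^N * coeff P k" unfolding Q by (simp add: k)
  also have "coeff P k = (\<Sum>n=1..N-1. betaN al n)" using pc k by simp
  finally show "coeff (Qpoly N al) (N - 1) = (-1)^N * (\<Sum>n=1..N-1. betaN al n)" .
qed

lemma coeff_mult_top:
  fixes p q :: "complex poly"
  assumes "degree p \<le> a" "degree q \<le> b"
  shows "coeff (p * q) (a + b) = coeff p a * coeff q b"
proof -
  have "coeff (p * q) (a + b) = (\<Sum>i\<le>a+b. coeff p i * coeff q (a + b - i))" by (rule coeff_mult)
  also have "\<dots> = (\<Sum>i\<in>{a}. coeff p i * coeff q (a + b - i))"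
  proof (intro sum.mono_neutral_right)
    show "\<forall>i\<in>{..a + b} - {a}. coeff p i * coeff q (a + b - i) = 0"
    proof
      fix i assume "i \<in> {..a + b} - {a}"
      then have "i > a \<or> a + b - i > b" by auto
      then show "coeff p i * coeff q (a + b - i) = 0" using assms by (auto simp: coeff_eq_0)
    qed
  qed auto
  finally show ?thesis by simp
qed

lemma coeff_mult_top2:
  fixes p q :: "complex poly"
  assumes "degree p \<le> a + 1" "degree q \<le> b + 1"
  shows "coeff (p * q) (a + b + 1) = coeff p (a+1) * coeff q b + coeff p a * coeff q (b+1)"
proof -
  have "coeff (p * q) (a + b + 1) = (\<Sum>i\<le>a+b+1. coeff p i * coeff q (a + b + 1 - i))" by (rule coeff_mult)
  also have "\<dots> = (\<Sum>i\<in>{a, a+1}. coeff p i * coeff q (a + b + 1 - i))"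
  proof (intro sum.mono_neutral_right)
    show "\<forall>i\<in>{..a + b + 1} - {a, a + 1}. coeff p i * coeff q (a + b + 1 - i) = 0"
    proof
      fix i assume "i \<in> {..a + b + 1} - {a, a + 1}"
      then have "i > a + 1 \<or> a + b + 1 - i > b + 1" by auto
      then show "coeff p i * coeff q (a + b + 1 - i) = 0" using assms by (auto simp: coeff_eq_0)
    qed
  qed auto
  also have "\<dots> = coeff p (a+1) * coeff q b + coeff p a * coeff q (b+1)"
    by (simp add: add.commute)
  finally show ?thesis .
qed


lemma prod_dvd:
  fixes xs :: "nat \<Rightarrow> complex"
  assumes "finite J" "inj_on xs J" "\<forall>j\<in>J. poly p (xs j) = 0"
  shows "(\<Prod>j\<in>J. [:- xs j, 1:]) dvd p"
  using assms
proof (induction J rule: finite_induct)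
  case empty
  then show ?case by simp
next
  case (insert a J)
  then have "(\<Prod>j\<in>J. [:- xs j, 1:]) dvd p" by (auto simp: inj_on_insert)
  then obtain q where q: "p = (\<Prod>j\<in>J. [:- xs j, 1:]) * q" by (elim dvdE)
  have "(\<Prod>j\<in>J. xs a - xs j) \<noteq> 0"
    using insert.hyps insert.prems by (auto simp: prod_zero_iff inj_on_def)
  moreover have "poly p (xs a) = 0" using insert.prems by simp
  ultimately have "poly q (xs a) = 0" unfolding q by (simp add: poly_prod)
  then have "[:- xs a, 1:] dvd q" by (simp add: poly_eq_0_iff_dvd)
  then have "[:- xs a, 1:] * (\<Prod>j\<in>J. [:- xs j, 1:]) dvd q * (\<Prod>j\<in>J. [:- xs j, 1:])"
    by (rule mult_dvd_mono) simp
  moreover have "(\<Prod>j\<in>insert a J. [:- xs j, 1:]) = [:- xs a, 1:] * (\<Prod>j\<in>J. [:- xs j, 1:])"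
    by (rule prod.insert[OF insert.hyps])
  ultimately show ?case using q by (simp only: mult.commute)
qed

lemma differentiable_prod':
  fixes f :: "nat \<Rightarrow> real \<Rightarrow> complex"
  assumes "\<forall>i\<in>A. f i differentiable (at x)"
  shows "(\<lambda>y. \<Prod>i\<in>A. f i y) differentiable (at x)"
  using assms
proof (induction A rule: infinite_finite_induct)
  case (insert a A)
  then show ?case by (simp add: differentiable_mult)
qed auto

lemma diff_transform:
  fixes f g :: "real \<Rightarrow> complex"
  assumes "f differentiable (at x)" "open T" "x \<in> T" "\<And>y. y \<in> T \<Longrightarrow> f y = g y"
  shows "g differentiable (at x)"
proof -
  have "(f has_vector_derivative vector_derivative f (at x)) (at x)"
    using assms(1) vector_derivative_works by blast
  then have "(g has_vector_derivative vector_derivative f (at x)) (at x)"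
    by (rule has_vector_derivative_transform_within_open[OF _ assms(2,3)]) (use assms(4) in auto)
  then show ?thesis by (rule differentiableI_vector)
qed

lemma poly_differentiable:
  fixes f :: "real \<Rightarrow> complex"
  assumes "f differentiable (at x)"
  shows "(\<lambda>y. poly p (f y)) differentiable (at x)"
proof -
  have "(\<lambda>w. poly p w) differentiable (at (f x))"
    using poly_DERIV[of p "f x"] field_differentiable_imp_differentiable field_differentiable_def by blast
  then show ?thesis using differentiable_compose[OF _ assms] by blast
qed

lemma has_vd_const_on:
  fixes f :: "real \<Rightarrow> complex"
  assumes "open T" "x \<in> T" "\<And>y. y \<in> T \<Longrightarrow> f y = c"
  shows "(f has_vector_derivative 0) (at x)"
  by (rule has_vector_derivative_transform_within_open[where f="\<lambda>y. c", OF _ assms(1,2)])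
     (use assms(3) in auto)

locale setting =
  fixes N g :: nat and al :: "nat \<Rightarrow> complex" and v :: "real \<Rightarrow> complex"
    and lam z :: "real \<Rightarrow> nat \<Rightarrow> complex" and S :: "real set"
  assumes Ng: "N = 2*g + 1 \<or> N = 2*g + 2" and g1: "g \<ge> 1"
    and S: "open S"
    and v': "\<forall>x\<in>S. (v has_vector_derivative alpha_tot N al / 2) (at x)"
    and b0nz: "even N \<longrightarrow> (\<forall>x\<in>S. v x \<noteq> 0)"
    and dist: "\<forall>x\<in>S. \<forall>j<g. \<forall>k<g. j \<noteq> k \<longrightarrow> lam x j \<noteq> lam x k"
    and lnz: "\<forall>x\<in>S. \<forall>j<g. lam x j \<noteq> 0"
    and znz: "\<forall>x\<in>S. \<forall>j<g. z x j \<noteq> 0"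
    and lam': "\<forall>x\<in>S. \<forall>j<g. ((\<lambda>y. lam y j) has_vector_derivative
        z x j * dH_dz N g al (b0fun N (v x)) (I0fun N g al (v x)) (lam x) (z x) j) (at x)"
    and z': "\<forall>x\<in>S. \<forall>j<g. ((\<lambda>y. z y j) has_vector_derivative
        - z x j * dH_dlam N g al (b0fun N (v x)) (I0fun N g al (v x)) (lam x) (z x) j) (at x)"
begin

abbreviation "b0 y \<equiv> b0fun N (v y)"
abbreviation "I0 y \<equiv> I0fun N g al (v y)"
abbreviation "AA y \<equiv> Ax N g al v lam z y"
abbreviation "BB y \<equiv> Bx N g v lam y"
abbreviation "PP y \<equiv> Px N g al v lam z y"
abbreviation "DD y \<equiv> Dx N g al v lam z y"
abbreviation "CC y \<equiv> Cx N g al v lam z y"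
abbreviation "QQ \<equiv> Qpoly N al"
abbreviation "alpha \<equiv> alpha_tot N al"
abbreviation "ee \<equiv> (if odd N then 0 else 1 :: complex)"
abbreviation "GG y \<equiv> AA y * DD y - QQ"

lemma inj_lam: "y \<in> S \<Longrightarrow> inj_on (lam y) {..<g}"
  using dist by (auto simp: inj_on_def)

lemma b0_nz: "y \<in> S \<Longrightarrow> b0 y \<noteq> 0"
  using b0nz by (auto simp: b0fun_def)

lemma A_eq: "y \<in> S \<Longrightarrow> AA y = Aexp N g al (I0 y) (lam y) (z y)"
  by (simp add: Ax_def Apoly_eq[OF g1 inj_lam])

lemma A_props:
  assumes "y \<in> S"
  shows "coeff (AA y) g = a0fun N al (I0 y)" "coeff (AA y) (g+1) = ee" "degree (AA y) \<le> g + 1"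
    "\<And>j. j < g \<Longrightarrow> poly (AA y) (lam y j) = z y j"
  using Aprop_D[OF Aexp_props[OF g1 inj_lam[OF assms]]] A_eq[OF assms] by auto

lemma P_eq: "y \<in> S \<Longrightarrow> PP y = Pexp N g al (I0 y) (lam y) (z y)"
  by (simp add: Px_def Ppoly_eq[OF g1 b0_nz])

lemma P_props:
  assumes "y \<in> S"
  shows "coeff (PP y) g = I0 y" "coeff (PP y) (g+1) = 2 * ee" "degree (PP y) \<le> g + 1"
    "\<And>j. j < g \<Longrightarrow> poly (PP y) (lam y j) = z y j + poly QQ (lam y j) / z y j"
  using Pexp_props[where N=N and al=al and iz="I0 y" and z="z y", OF g1 inj_lam[OF assms]] P_eq[OF assms]
  by (auto split: if_splits)

lemma B_eq: "BB y = smult (b0 y) (\<Prod>j<g. [:- lam y j, 1:])"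
  by (simp add: Bx_def Bpoly_def)

lemma B_props:
  assumes "y \<in> S"
  shows "degree (BB y) = g" "coeff (BB y) g = b0 y" "BB y \<noteq> 0"
    "\<And>j. j < g \<Longrightarrow> poly (BB y) (lam y j) = 0"
    "\<And>j. j < g \<Longrightarrow> poly (pderiv (BB y)) (lam y j) = Bprime g (b0 y) (lam y) j"
proof -
  have pc: "coeff (\<Prod>j<g. [:- lam y j, 1:]) g = 1 \<and> degree (\<Prod>j<g. [:- lam y j, 1:]) = g"
  proof -
    have "0 \<in> {..<g}" using g1 by simp
    then have "{..<g} \<noteq> {}" by blast
    then show ?thesis using prod_lin_coeffs[of "{..<g}" "\<lambda>j. - lam y j"] by simp
  qed
  show "degree (BB y) = g" "coeff (BB y) g = b0 y" using pc b0_nz[OF assms] by (auto simp: B_eq)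
  then show "BB y \<noteq> 0" using b0_nz[OF assms] by auto
  show "poly (BB y) (lam y j) = 0" if "j < g" for j
    using that by (auto simp: B_eq poly_prod prod_zero_iff)
  show "poly (pderiv (BB y)) (lam y j) = Bprime g (b0 y) (lam y) j" if j: "j < g" for j
  proof -
    have "(\<Prod>i<g. [:- lam y i, 1:]) = [:- lam y j, 1:] * Prr g (lam y) j"
      unfolding Prr_def using j by (subst prod_remove_nat[of j]) auto
    then have "poly (pderiv (\<Prod>i<g. [:- lam y i, 1:])) (lam y j) = poly (Prr g (lam y) j) (lam y j)"
      by (simp only: pderiv_mult poly_mult poly_add) (simp add: pderiv_pCons)
    then show ?thesis by (simp add: B_eq pderiv_smult Bprime_def Prr_def poly_prod)
  qed
qed

lemma D_eq: "DD y = PP y - AA y"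
  by (simp add: Dx_def)

lemma G_dvd:
  assumes "y \<in> S"
  shows "BB y dvd GG y"
proof -
  have "\<forall>j\<in>{..<g}. poly (GG y) (lam y j) = 0"
    using A_props(4)[OF assms] P_props(4)[OF assms] znz assms by (auto simp: D_eq)
  then have "(\<Prod>j<g. [:- lam y j, 1:]) dvd GG y"
    by (intro prod_dvd inj_lam assms) auto
  then show ?thesis using b0_nz[OF assms] by (simp add: B_eq smult_dvd_iff)
qed

lemma BC: "y \<in> S \<Longrightarrow> BB y * CC y = GG y"
  using G_dvd by (simp add: Cx_def dvd_mult_div_cancel)

lemma G_props:
  assumes "y \<in> S"
  shows "degree (GG y) \<le> 2*g + 1" "coeff (GG y) (2*g+1) = b0 y * b0 y"
proof -
  have dA: "degree (AA y) \<le> g + 1" using A_props[OF assms] by simp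
  have dD: "degree (DD y) \<le> g + 1" unfolding D_eq using A_props[OF assms] P_props[OF assms]
    by (intro degree_diff_le) auto
  have cD1: "coeff (DD y) (g+1) = ee" unfolding D_eq using A_props[OF assms] P_props[OF assms] by simp
  have cDg: "coeff (DD y) g = I0 y - a0fun N al (I0 y)"
    unfolding D_eq using A_props[OF assms] P_props[OF assms] by simp
  have N2: "N \<ge> 2" using Ng g1 by auto
  have cAD2: "coeff (AA y * DD y) (2*g+2) = ee"
    using coeff_mult_top[OF dA dD] A_props[OF assms] cD1 by (simp add: mult_2)
  have cQ2: "coeff QQ (2*g+2) = ee"
  proof (cases "odd N")
    case True
    then have "N = 2*g+1" using Ng by auto
    then show ?thesis using Q_props(1)[OF N2, of al] True by (simp add: coeff_eq_0)
  next
    case False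
    then have "N = 2*g+2" using Ng by auto
    then show ?thesis using Q_props(2)[OF N2, of al] False by simp
  qed
  have dAD: "degree (AA y * DD y) \<le> 2*g+2"
    using degree_mult_le[of "AA y" "DD y"] dA dD by linarith
  have dQ: "degree QQ \<le> 2*g+2" using Q_props(1)[OF N2, of al] Ng by auto
  show "degree (GG y) \<le> 2*g + 1"
  proof (rule degree_le, intro allI impI)
    fix i assume "2*g+1 < i"
    then consider "i = 2*g+2" | "i > 2*g+2" by linarith
    then show "coeff (GG y) i = 0"
    proof cases
      case 1 then show ?thesis using cAD2 cQ2 by simp
    next
      case 2 then show ?thesis using dAD dQ by (simp add: coeff_eq_0)
    qed
  qed
  have cAD1: "coeff (AA y * DD y) (2*g+1) = ee * I0 y"
  proof -
    have "coeff (AA y * DD y) (g + g + 1) = coeff (AA y) (g+1) * coeff (DD y) g + coeff (AA y) g * coeff (DD y) (g+1)"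
      by (rule coeff_mult_top2) (use dA dD in auto)
    then have "coeff (AA y * DD y) (2*g+1) = ee * (I0 y - a0fun N al (I0 y)) + a0fun N al (I0 y) * ee"
      using A_props[OF assms] cD1 cDg by (simp add: mult_2)
    then show ?thesis by (cases "odd N") simp_all
  qed
  show "coeff (GG y) (2*g+1) = b0 y * b0 y"
  proof (cases "odd N")
    case True
    then have N: "N = 2*g+1" using Ng by auto
    have "coeff QQ (2*g+1) = -1" using Q_props(2)[OF N2, of al] True N by simp
    then show ?thesis using cAD1 True by (simp add: b0fun_def)
  next
    case False
    then have N: "N = 2*g+2" using Ng by auto
    have "coeff QQ (2*g+1) = (\<Sum>n=1..2*g+1. betaN al n)"
      using Q_props(3)[OF N2, of al] False N by simp
    then show ?thesis using cAD1 False by (simp add: b0fun_def I0fun_def power2_eq_square)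
  qed
qed

lemma C_props:
  assumes "y \<in> S"
  shows "degree (CC y) \<le> g + 1" "coeff (CC y) (g+1) = b0 y"
proof -
  show dC: "degree (CC y) \<le> g + 1"
  proof (cases "CC y = 0")
    case False
    have "degree (BB y * CC y) = g + degree (CC y)"
      using degree_mult_eq[OF B_props(3)[OF assms] False] B_props(1)[OF assms] by simp
    then show ?thesis using BC[OF assms] G_props(1)[OF assms] by simp
  qed simp
  have "coeff (BB y * CC y) (g + (g+1)) = coeff (BB y) g * coeff (CC y) (g+1)"
    by (rule coeff_mult_top) (use B_props(1)[OF assms] dC in auto)
  then have "b0 y * coeff (CC y) (g+1) = b0 y * b0 y"
    using BC[OF assms] G_props(2)[OF assms] B_props(2)[OF assms] by (simp add: mult_2)
  then show "coeff (CC y) (g+1) = b0 y" using b0_nz[OF assms] by simp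
qed

end


context setting
begin

abbreviation "ld x j \<equiv> z x j * dH_dz N g al (b0 x) (I0 x) (lam x) (z x) j"
abbreviation "zd x j \<equiv> - z x j * dH_dlam N g al (b0 x) (I0 x) (lam x) (z x) j"
abbreviation "WW x j \<equiv> Bprime g (b0 x) (lam x) j"

lemma W_nz: "x \<in> S \<Longrightarrow> j < g \<Longrightarrow> WW x j \<noteq> 0"
  using b0_nz[of x] dist by (auto simp: Bprime_def prod_zero_iff)

lemma F4:
  assumes x: "x \<in> S" and j: "j < g"
  shows "WW x j * ld x j = z x j - poly QQ (lam x j) / z x j"
    "WW x j * zd x j = z x j * poly (pderiv (PP x)) (lam x j) - poly (pderiv QQ) (lam x j)"
proof -
  have zj: "z x j \<noteq> 0" using znz x j by auto
  show "WW x j * ld x j = z x j - poly QQ (lam x j) / z x j"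
    unfolding dHz[where z="z x" and j=j and g=g, OF j zj] using W_nz[OF x j] zj by (simp add: field_simps power2_eq_square)
  show "WW x j * zd x j = z x j * poly (pderiv (PP x)) (lam x j) - poly (pderiv QQ) (lam x j)"
    unfolding dHlam[where z="z x" and j=j and g=g and lam="lam x", OF j inj_lam[OF x] b0_nz[OF x] zj] P_eq[OF x] using W_nz[OF x j] zj
    by (simp add: field_simps)
qed

lemma hv: "x \<in> S \<Longrightarrow> (v has_vector_derivative alpha / 2) (at x)"
  using v' by auto

lemma hb0: "x \<in> S \<Longrightarrow> ((\<lambda>y. b0 y) has_vector_derivative (if odd N then 0 else alpha / 2)) (at x)"
  by (cases "odd N") (auto simp: b0fun_def hv)

lemma hI0: "x \<in> S \<Longrightarrow> ((\<lambda>y. I0 y) has_vector_derivative alpha * b0 x) (at x)"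
proof (cases "odd N")
  case True
  assume x: "x \<in> S"
  have "((\<lambda>y. 2 * v y) has_vector_derivative 2 * (alpha / 2)) (at x)"
    by (rule has_vector_derivative_mult_right[OF hv[OF x]])
  then show ?thesis using True by (simp add: I0fun_def b0fun_def)
next
  case False
  assume x: "x \<in> S"
  have "((\<lambda>y. v y * v y + (\<Sum>n=1..2*g+1. betaN al n)) has_vector_derivative v x * (alpha / 2) + alpha / 2 * v x) (at x)"
    by (subst has_vector_derivative_add_const) (rule has_vector_derivative_mult[OF hv[OF x] hv[OF x]])
  then show ?thesis using False by (simp add: I0fun_def b0fun_def power2_eq_square algebra_simps)
qed

lemma dv: "x \<in> S \<Longrightarrow> v differentiable (at x)"
  using hv differentiableI_vector by blast
lemma db0: "x \<in> S \<Longrightarrow> (\<lambda>y. b0 y) differentiable (at x)"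
  using hb0 differentiableI_vector by blast
lemma dI0: "x \<in> S \<Longrightarrow> (\<lambda>y. I0 y) differentiable (at x)"
  using hI0 differentiableI_vector by blast
lemma dlam: "x \<in> S \<Longrightarrow> j < g \<Longrightarrow> (\<lambda>y. lam y j) differentiable (at x)"
  using lam' differentiableI_vector by blast
lemma dz: "x \<in> S \<Longrightarrow> j < g \<Longrightarrow> (\<lambda>y. z y j) differentiable (at x)"
  using z' differentiableI_vector by blast

lemma dLag:
  assumes x: "x \<in> S" and j: "j < g"
  shows "(\<lambda>y. poly (Lag (lam y) {..<g} j) \<mu>) differentiable (at x)"
proof -
  have "(\<lambda>y. (\<Prod>i\<in>{..<g}-{j}. \<mu> - lam y i) / (\<Prod>i\<in>{..<g}-{j}. lam y j - lam y i)) differentiable (at x)"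
  proof (rule differentiable_divide)
    show "(\<lambda>y. \<Prod>i\<in>{..<g}-{j}. \<mu> - lam y i) differentiable (at x)"
      by (rule differentiable_prod') (auto intro!: differentiable_diff dlam[OF x])
    show "(\<lambda>y. \<Prod>i\<in>{..<g}-{j}. lam y j - lam y i) differentiable (at x)"
      by (rule differentiable_prod') (auto intro!: differentiable_diff dlam[OF x] j)
    show "(\<Prod>i\<in>{..<g}-{j}. lam x j - lam x i) \<noteq> 0"
      using dist x j by (auto simp: prod_zero_iff)
  qed
  then show ?thesis by (simp add: poly_Lag)
qed

lemma da0: "x \<in> S \<Longrightarrow> (\<lambda>y. a0fun N al (I0 y)) differentiable (at x)"
  by (cases "odd N") (auto simp: a0fun_def intro!: differentiable_divide differentiable_diff dI0)

lemma dK: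
  assumes x: "x \<in> S" and w: "w differentiable (at x)"
  shows "(\<lambda>y. poly (Kpoly N g al (I0 y)) (w y)) differentiable (at x)"
proof -
  have "(\<lambda>y. ee * w y ^ (g+1) + a0fun N al (I0 y) * w y ^ g) differentiable (at x)"
    by (intro differentiable_add differentiable_mult differentiable_power w da0[OF x] differentiable_const)
  moreover have "(\<lambda>y. ee * w y ^ (g+1) + a0fun N al (I0 y) * w y ^ g) = (\<lambda>y. poly (Kpoly N g al (I0 y)) (w y))"
    by (rule ext) (simp add: Kpoly_def poly_monom)
  ultimately show ?thesis by simp
qed

lemma dA: "x \<in> S \<Longrightarrow> (\<lambda>y. poly (AA y) \<mu>) differentiable (at x)"
proof -
  assume x: "x \<in> S"
  have "(\<lambda>y. poly (Kpoly N g al (I0 y)) \<mu> + (\<Sum>j<g. (z y j - poly (Kpoly N g al (I0 y)) (lam y j))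
       * poly (Lag (lam y) {..<g} j) \<mu>)) differentiable (at x)"
    by (intro differentiable_add differentiable_sum ballI differentiable_mult differentiable_diff
        dK[OF x] dz[OF x] dlam[OF x] dLag[OF x] differentiable_const finite_lessThan) auto
  then show ?thesis
    by (rule diff_transform[OF _ S x]) (simp add: A_eq Aexp_def poly_sum)
qed

lemma dB: "x \<in> S \<Longrightarrow> (\<lambda>y. poly (BB y) \<mu>) differentiable (at x)"
proof -
  assume x: "x \<in> S"
  have "(\<lambda>y. b0 y * (\<Prod>j<g. \<mu> - lam y j)) differentiable (at x)"
    by (intro differentiable_mult db0[OF x] differentiable_prod' ballI differentiable_diff
        differentiable_const dlam[OF x]) auto
  then show ?thesis by (simp add: B_eq poly_prod)
qed

lemma dnumer: "x \<in> S \<Longrightarrow> j < g \<Longrightarrow> (\<lambda>y. numer N g al (I0 y) (lam y) (z y) j) differentiable (at x)"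
  unfolding numer_def using znz
  by (cases "odd N") (auto intro!: differentiable_add differentiable_diff differentiable_mult
      differentiable_divide differentiable_power poly_differentiable dz dlam dI0)

lemma dP: "x \<in> S \<Longrightarrow> (\<lambda>y. poly (PP y) \<mu>) differentiable (at x)"
proof -
  assume x: "x \<in> S"
  have "(\<lambda>y. ((if odd N then 0 else 2 * \<mu> ^ (g+1)) + I0 y * \<mu> ^ g)
      + (\<Sum>j<g. numer N g al (I0 y) (lam y) (z y) j * poly (Lag (lam y) {..<g} j) \<mu>)) differentiable (at x)"
    by (intro differentiable_add differentiable_sum ballI differentiable_mult
        dnumer[OF x] dLag[OF x] differentiable_const dI0[OF x] finite_lessThan) auto
  then show ?thesis
    by (rule diff_transform[OF _ S x]) (simp add: P_eq Pexp_def poly_sum Rpoly_def poly_monom)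
qed

end


lemma alg_P2:
  fixes a p' q q' z W ld zd :: complex
  assumes z: "z \<noteq> 0" and W: "W \<noteq> 0" and e1: "W * ld = z - q / z" and e2: "W * zd = z * p' - q'"
    and c: "(z + q / z) * zd + (a + p' * ld) * z = z * zd + zd * z + ld * q'"
  shows "a = 0"
proof -
  have e: "a * z = z * zd + zd * z + ld * q' - p' * ld * z - (z + q / z) * zd"
    using c by (simp add: algebra_simps)
  have "a * z * W = (z * zd + zd * z + ld * q' - p' * ld * z - (z + q / z) * zd) * W"
    using e by simp
  also have "\<dots> = 2 * z * (W * zd) + (W * ld) * q' - p' * z * (W * ld) - (z + q / z) * (W * zd)"
    by (simp add: algebra_simps)
  also have "\<dots> = 2 * z * (z * p' - q') + (z - q / z) * q' - p' * z * (z - q / z) - (z + q / z) * (z * p' - q')"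
    by (simp only: e1 e2)
  also have "\<dots> = 0" using z by (simp add: field_simps)
  finally show ?thesis using z W by simp
qed

lemma alg_A:
  fixes a c A' P' q q' z W ld zd :: complex
  assumes z: "z \<noteq> 0" and W: "W \<noteq> 0" and e1: "W * ld = z - q / z" and e2: "W * zd = z * P' - q'"
    and hA: "a + A' * ld = zd"
    and hC: "W * c = A' * (q / z) + z * (P' - A') - q'"
  shows "a = c"
proof -
  have "W * a = W * zd - A' * (W * ld)" using hA by (simp add: algebra_simps flip: hA)
  also have "\<dots> = z * P' - q' - A' * (z - q / z)" by (simp only: e1 e2)
  also have "\<dots> = W * c" unfolding hC by (simp add: algebra_simps)
  finally show ?thesis using W by simp
qed

context setting
begin

lemma vd_unique_on:
  fixes f h :: "real \<Rightarrow> complex"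
  assumes "(f has_vector_derivative a) (at x)" "(h has_vector_derivative b) (at x)"
    "x \<in> S" "\<And>y. y \<in> S \<Longrightarrow> f y = h y"
  shows "a = b"
proof -
  have "(h has_vector_derivative a) (at x)"
    by (rule has_vector_derivative_transform_within_open[OF assms(1) S assms(3)]) (use assms(4) in auto)
  then show ?thesis using assms(2) vector_derivative_unique_at by blast
qed

lemma get_deriv:
  assumes x: "x \<in> S" and deg: "\<forall>y\<in>S. degree (p y) \<le> g + 1"
    and dif: "\<And>\<mu>. (\<lambda>y. poly (p y) \<mu>) differentiable (at x)"
  shows "\<exists>p'. PD p p' x \<and> degree p' \<le> g + 1
     \<and> (\<forall>i. ((\<lambda>y. coeff (p y) i) has_vector_derivative coeff p' i) (at x))
     \<and> (\<forall>s s'. (s has_vector_derivative s') (at x) \<longrightarrow>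
          ((\<lambda>y. poly (p y) (s y)) has_vector_derivative poly p' (s x) + poly (pderiv (p x)) (s x) * s') (at x))"
proof (rule L_main[OF S x deg])
  show "inj_on (of_nat :: nat \<Rightarrow> complex) {..g+1}" by (simp add: inj_on_def)
qed (use dif in auto)

lemma main_at:
  assumes x: "x \<in> S"
  shows "BB x dvd GG x \<and> degree (CC x) \<le> g + 1
   \<and> (\<forall>\<mu>::complex.
        ((\<lambda>y. poly (AA y) \<mu>) has_vector_derivative
           poly (CC x) \<mu> - poly (BB x) \<mu> * (\<mu> + u1x N g al v lam z x)) (at x)
      \<and> ((\<lambda>y. poly (BB y) \<mu>) has_vector_derivative
           poly (DD x) \<mu> - poly (AA x) \<mu>) (at x)
      \<and> ((\<lambda>y. poly (CC y) \<mu>) has_vector_derivative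
           (\<mu> + alpha + u1x N g al v lam z x) * poly (AA x) \<mu>
           - poly (DD x) \<mu> * (\<mu> + u1x N g al v lam z x)) (at x)
      \<and> ((\<lambda>y. poly (DD y) \<mu>) has_vector_derivative
           (\<mu> + alpha + u1x N g al v lam z x) * poly (BB x) \<mu>
           - poly (CC x) \<mu>) (at x))"
proof -
  define u1 where "u1 = u1x N g al v lam z x"
  obtain Ad where Ad: "PD (Ax N g al v lam z) Ad x" "degree Ad \<le> g + 1"
      "\<forall>i. ((\<lambda>y. coeff (AA y) i) has_vector_derivative coeff Ad i) (at x)"
      "\<forall>s s'. (s has_vector_derivative s') (at x) \<longrightarrow>
          ((\<lambda>y. poly (AA y) (s y)) has_vector_derivative poly Ad (s x) + poly (pderiv (AA x)) (s x) * s') (at x)"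
    using get_deriv[OF x, of "Ax N g al v lam z"] A_props(3) dA[OF x] by blast
  obtain Bd where Bd: "PD (Bx N g v lam) Bd x" "degree Bd \<le> g + 1"
      "\<forall>i. ((\<lambda>y. coeff (BB y) i) has_vector_derivative coeff Bd i) (at x)"
      "\<forall>s s'. (s has_vector_derivative s') (at x) \<longrightarrow>
          ((\<lambda>y. poly (BB y) (s y)) has_vector_derivative poly Bd (s x) + poly (pderiv (BB x)) (s x) * s') (at x)"
    using get_deriv[OF x, of "Bx N g v lam"] B_props(1) dB[OF x] by fastforce
  obtain Pd where Pd: "PD (Px N g al v lam z) Pd x" "degree Pd \<le> g + 1"
      "\<forall>i. ((\<lambda>y. coeff (PP y) i) has_vector_derivative coeff Pd i) (at x)"
      "\<forall>s s'. (s has_vector_derivative s') (at x) \<longrightarrow>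
          ((\<lambda>y. poly (PP y) (s y)) has_vector_derivative poly Pd (s x) + poly (pderiv (PP x)) (s x) * s') (at x)"
    using get_deriv[OF x, of "Px N g al v lam z"] P_props(3) dP[OF x] by blast
  have cA1: "coeff Ad (g+1) = 0"
  proof -
    have "((\<lambda>y. coeff (AA y) (g+1)) has_vector_derivative 0) (at x)"
      by (rule has_vd_const_on[OF S x, where c=ee]) (rule A_props(2))
    then show ?thesis using Ad(3) vector_derivative_unique_at by blast
  qed
  have cAg: "coeff Ad g = vector_derivative (\<lambda>y. coeff (AA y) g) (at x)"
    using Ad(3) vector_derivative_at by metis
  have cB1: "coeff Bd (g+1) = 0"
  proof -
    have "((\<lambda>y. coeff (BB y) (g+1)) has_vector_derivative 0) (at x)"
      by (rule has_vd_const_on[OF S x, where c=0]) (simp add: B_props(1) coeff_eq_0)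
    then show ?thesis using Bd(3) vector_derivative_unique_at by blast
  qed
  have cBg: "coeff Bd g = (if odd N then 0 else alpha / 2)"
    using vd_unique_on[OF Bd(3)[rule_format, of g] hb0[OF x] x] B_props(2) by simp
  have cP1: "coeff Pd (g+1) = 0"
  proof -
    have "((\<lambda>y. coeff (PP y) (g+1)) has_vector_derivative 0) (at x)"
      by (rule has_vd_const_on[OF S x, where c="2*ee"]) (rule P_props(2))
    then show ?thesis using Pd(3) vector_derivative_unique_at by blast
  qed
  have cPg: "coeff Pd g = alpha * b0 x"
    using vd_unique_on[OF Pd(3)[rule_format, of g] hI0[OF x] x] P_props(1) by simp
  have chA: "poly Ad (lam x j) + poly (pderiv (AA x)) (lam x j) * ld x j = zd x j" if j: "j < g" for j
    by (rule vd_unique_on[OF Ad(4)[rule_format, OF lam'[rule_format, OF x j]] z'[rule_format, OF x j] x])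
       (rule A_props(4)[OF _ j])
  have chB: "poly Bd (lam x j) + WW x j * ld x j = 0" if j: "j < g" for j
  proof -
    have "poly Bd (lam x j) + poly (pderiv (BB x)) (lam x j) * ld x j = 0"
      by (rule vd_unique_on[OF Bd(4)[rule_format, OF lam'[rule_format, OF x j]] has_vd_const_on[OF S x, where c=0] x])
         (auto intro: B_props(4)[OF _ j])
    then show ?thesis using B_props(5)[OF x j] by simp
  qed
  have chP: "(z x j + poly QQ (lam x j) / z x j) * zd x j + (poly Pd (lam x j) + poly (pderiv (PP x)) (lam x j) * ld x j) * z x j
       = z x j * zd x j + zd x j * z x j + ld x j * poly (pderiv QQ) (lam x j)" if j: "j < g" for j
  proof -
    have h1: "((\<lambda>y. poly (PP y) (lam y j) * z y j) has_vector_derivative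
       poly (PP x) (lam x j) * zd x j + (poly Pd (lam x j) + poly (pderiv (PP x)) (lam x j) * ld x j) * z x j) (at x)"
      by (rule has_vector_derivative_mult[OF Pd(4)[rule_format, OF lam'[rule_format, OF x j]] z'[rule_format, OF x j]])
    have hq: "((\<lambda>y. poly QQ (lam y j)) has_vector_derivative ld x j * poly (pderiv QQ) (lam x j)) (at x)"
      using field_vector_diff_chain_at[OF lam'[rule_format, OF x j] poly_DERIV] by (simp add: o_def)
    have h2: "((\<lambda>y. z y j * z y j + poly QQ (lam y j)) has_vector_derivative
       z x j * zd x j + zd x j * z x j + ld x j * poly (pderiv QQ) (lam x j)) (at x)"
      by (rule has_vector_derivative_add[OF has_vector_derivative_mult[OF z'[rule_format, OF x j] z'[rule_format, OF x j]] hq])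
    have "poly (PP x) (lam x j) * zd x j + (poly Pd (lam x j) + poly (pderiv (PP x)) (lam x j) * ld x j) * z x j
       = z x j * zd x j + zd x j * z x j + ld x j * poly (pderiv QQ) (lam x j)"
    proof (rule vd_unique_on[OF h1 h2 x])
      fix y assume y: "y \<in> S"
      have "z y j \<noteq> 0" using znz y j by auto
      then show "poly (PP y) (lam y j) * z y j = z y j * z y j + poly QQ (lam y j)"
        using P_props(4)[OF y j] by (simp add: field_simps)
    qed
    then show ?thesis using P_props(4)[OF x j] by simp
  qed
  have injx: "inj_on (lam x) {..<g}" by (rule inj_lam[OF x])
  have zx: "z x j \<noteq> 0" if "j < g" for j using znz x that by auto
  have dAx: "degree (AA x) \<le> g + 1" and dPx: "degree (PP x) \<le> g + 1" and dCx: "degree (CC x) \<le> g + 1"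
    using A_props(3)[OF x] P_props(3)[OF x] C_props(1)[OF x] by auto
  have dBx: "degree (BB x) = g" using B_props(1)[OF x] .
  have dDx: "degree (DD x) \<le> g + 1" unfolding D_eq using dPx dAx by (rule degree_diff_le)
  have Bd_eq: "Bd = DD x - AA x"
  proof (rule poly_uniq[where I="{..<g}" and xs="lam x" and m=g and n="g+1"])
    show "degree (DD x - AA x) \<le> g + 1" using dDx dAx by (rule degree_diff_le)
    show "\<forall>i. g \<le> i \<longrightarrow> i \<le> g + 1 \<longrightarrow> coeff Bd i = coeff (DD x - AA x) i"
    proof (intro allI impI)
      fix i assume "g \<le> i" "i \<le> g + 1"
      then consider "i = g" | "i = g + 1" by linarith
      then show "coeff Bd i = coeff (DD x - AA x) i"
      proof cases
        case 1
        have c1: "coeff (DD x - AA x) g = I0 x - 2 * a0fun N al (I0 x)"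
          by (simp only: D_eq coeff_diff A_props(1)[OF x] P_props(1)[OF x]) simp
        have X: "I0 x - 2 * a0fun N al (I0 x) = (if odd N then 0 else alpha/2)"
          by (simp add: a0fun_def field_simps)
        show ?thesis unfolding 1 c1 X cBg ..
      next
        case 2
        have "coeff (DD x - AA x) (g+1) = 2 * ee - ee - ee"
          by (simp only: D_eq coeff_diff A_props(2)[OF x] P_props(2)[OF x])
        then show ?thesis using cB1 2 by simp
      qed
    qed
    show "\<forall>k\<in>{..<g}. poly Bd (lam x k) = poly (DD x - AA x) (lam x k)"
    proof
      fix k assume "k \<in> {..<g}"
      then have k: "k < g" by simp
      have "poly Bd (lam x k) = - (WW x k * ld x k)"
        using chB[OF k] by (simp add: eq_neg_iff_add_eq_0)
      also have "\<dots> = - (z x k - poly QQ (lam x k) / z x k)" by (simp only: F4(1)[OF x k])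
      also have "\<dots> = poly (DD x - AA x) (lam x k)"
        using A_props(4)[OF x k] P_props(4)[OF x k] by (simp add: D_eq)
      finally show "poly Bd (lam x k) = poly (DD x - AA x) (lam x k)" .
    qed
  qed (use g1 injx Bd(2) in auto)
  have Pd_eq: "Pd = smult alpha (BB x)"
  proof (rule poly_uniq[where I="{..<g}" and xs="lam x" and m=g and n="g+1"])
    show "degree (smult alpha (BB x)) \<le> g + 1" using dBx degree_smult_le[of alpha "BB x"] by linarith
    show "\<forall>i. g \<le> i \<longrightarrow> i \<le> g + 1 \<longrightarrow> coeff Pd i = coeff (smult alpha (BB x)) i"
    proof (intro allI impI)
      fix i assume "g \<le> i" "i \<le> g + 1"
      then consider "i = g" | "i = g + 1" by linarith
      then show "coeff Pd i = coeff (smult alpha (BB x)) i"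
      proof cases
        case 1 then show ?thesis using cPg B_props(2)[OF x] by simp
      next
        case 2 then show ?thesis using cP1 dBx by (simp add: coeff_eq_0)
      qed
    qed
    show "\<forall>k\<in>{..<g}. poly Pd (lam x k) = poly (smult alpha (BB x)) (lam x k)"
    proof
      fix k assume "k \<in> {..<g}"
      then have k: "k < g" by simp
      have "poly Pd (lam x k) = 0"
        by (rule alg_P2[OF zx[OF k] W_nz[OF x k] F4(1)[OF x k] F4(2)[OF x k] chP[OF k]])
      then show "poly Pd (lam x k) = poly (smult alpha (BB x)) (lam x k)"
        using B_props(4)[OF x k] by simp
    qed
  qed (use g1 injx Pd(2) in auto)
  define U where "U = [:u1, 1:]"
  have Ad_eq: "Ad = CC x - BB x * U"
  proof (rule poly_uniq[where I="{..<g}" and xs="lam x" and m=g and n="g+1"])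
    have "degree (BB x * U) \<le> g + 1" using degree_mult_le[of "BB x" U] dBx by (simp add: U_def)
    then show "degree (CC x - BB x * U) \<le> g + 1" using dCx by (intro degree_diff_le)
    have BU: "BB x * U = smult u1 (BB x) + pCons 0 (BB x)" by (simp add: U_def mult_pCons_right)
    obtain g' where g': "g = Suc g'" using g1 by (cases g) auto
    show "\<forall>i. g \<le> i \<longrightarrow> i \<le> g + 1 \<longrightarrow> coeff Ad i = coeff (CC x - BB x * U) i"
    proof (intro allI impI)
      fix i assume "g \<le> i" "i \<le> g + 1"
      then consider "i = g" | "i = g + 1" by linarith
      then show "coeff Ad i = coeff (CC x - BB x * U) i"
      proof cases
        case 1
        have cBU: "coeff (BB x * U) g = u1 * b0 x + coeff (BB x) (g - 1)"
          unfolding BU using B_props(2)[OF x] g' by simp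
        have u1b: "u1 * b0 x = - coeff Ad g + coeff (CC x) g - coeff (BB x) (g - 1)"
          unfolding u1_def u1x_def cAg using b0_nz[OF x] by (cases "odd N") (simp_all add: b0fun_def)
        show ?thesis unfolding 1 coeff_diff cBU u1b by simp
      next
        case 2
        have cBU: "coeff (BB x * U) (g+1) = b0 x"
          unfolding BU using B_props(2)[OF x] dBx by (simp add: coeff_eq_0)
        show ?thesis unfolding 2 coeff_diff cBU C_props(2)[OF x] cA1 by simp
      qed
    qed
    show "\<forall>k\<in>{..<g}. poly Ad (lam x k) = poly (CC x - BB x * U) (lam x k)"
    proof
      fix k assume "k \<in> {..<g}"
      then have k: "k < g" by simp
      have GC: "WW x k * poly (CC x) (lam x k) = poly (pderiv (AA x)) (lam x k) * (poly QQ (lam x k) / z x k)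
          + z x k * (poly (pderiv (PP x)) (lam x k) - poly (pderiv (AA x)) (lam x k)) - poly (pderiv QQ) (lam x k)"
      proof -
        have "pderiv (BB x * CC x) = pderiv (GG x)" using BC[OF x] by simp
        then have "poly (pderiv (BB x) * CC x + BB x * pderiv (CC x)) (lam x k)
            = poly (pderiv (AA x) * DD x + AA x * pderiv (DD x) - pderiv QQ) (lam x k)"
          by (simp only: pderiv_mult pderiv_diff mult.commute add.commute)
        then show ?thesis
          using B_props(4,5)[OF x k] A_props(4)[OF x k] P_props(4)[OF x k]
          by (simp add: D_eq pderiv_diff)
      qed
      have "poly Ad (lam x k) = poly (CC x) (lam x k)"
        by (rule alg_A[OF zx[OF k] W_nz[OF x k] F4(1)[OF x k] F4(2)[OF x k] chA[OF k] GC])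
      then show "poly Ad (lam x k) = poly (CC x - BB x * U) (lam x k)"
        using B_props(4)[OF x k] by simp
    qed
  qed (use g1 injx Ad(2) in auto)
  have Dfun: "Dx N g al v lam z = (\<lambda>y. PP y - AA y)" by (rule ext) (simp add: D_eq)
  have Dd: "PD (Dx N g al v lam z) (Pd - Ad) x"
    unfolding Dfun by (rule PD_diff[OF Pd(1) Ad(1)])
  \<comment> \<open>nodes avoiding the roots of B\<close>
  define R where "R = {w. poly (BB x) w = 0}"
  have finR: "finite R" unfolding R_def using poly_roots_finite[OF B_props(3)[OF x]] .
  obtain c :: complex where c: "c \<notin> (\<lambda>(w, k). w - of_nat k) ` (R \<times> {..g+1})"
    using ex_new_if_finite[OF infinite_UNIV_char_0, of "(\<lambda>(w, k). w - of_nat k) ` (R \<times> {..g+1})"]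
      finR by blast
  define nd where "nd k = c + of_nat k" for k
  have ndB: "poly (BB x) (nd k) \<noteq> 0" if "k \<le> g + 1" for k
  proof
    assume "poly (BB x) (nd k) = 0"
    then have "(nd k, k) \<in> R \<times> {..g+1}" using that by (simp add: R_def)
    then have "(\<lambda>(w, k). w - of_nat k) (nd k, k) \<in> (\<lambda>(w, k). w - of_nat k) ` (R \<times> {..g+1})" by blast
    then show False using c by (simp add: nd_def)
  qed
  have dG: "(\<lambda>y. poly (GG y) \<mu>) differentiable (at x)" for \<mu>
    by (simp add: D_eq) (intro differentiable_diff differentiable_mult dA[OF x] dP[OF x] differentiable_const)
  have dCn: "(\<lambda>y. poly (CC y) (nd k)) differentiable (at x)" if k: "k \<le> g + 1" for k
  proof -
    have "continuous (at x) (\<lambda>y. poly (BB y) (nd k))"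
      using dB[OF x] differentiable_imp_continuous_within by blast
    then obtain e where e: "e > 0" "\<forall>y. dist x y < e \<longrightarrow> poly (BB y) (nd k) \<noteq> 0"
      using continuous_at_avoid ndB[OF k] by blast
    have "(\<lambda>y. poly (GG y) (nd k) / poly (BB y) (nd k)) differentiable (at x)"
      using dG dB[OF x] ndB[OF k] by (intro differentiable_divide) auto
    then show ?thesis
    proof (rule diff_transform[where T="S \<inter> ball x e"])
      show "open (S \<inter> ball x e)" using S by auto
      show "x \<in> S \<inter> ball x e" using x e by auto
      fix y assume y: "y \<in> S \<inter> ball x e"
      then have "poly (BB y) (nd k) \<noteq> 0" using e by (auto simp: dist_commute)
      moreover have "poly (BB y) (nd k) * poly (CC y) (nd k) = poly (GG y) (nd k)"
        using BC[of y] y by (metis IntD1 poly_mult)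
      ultimately show "poly (GG y) (nd k) / poly (BB y) (nd k) = poly (CC y) (nd k)"
        by (simp add: field_simps)
    qed
  qed
  obtain Cd where Cd: "PD (Cx N g al v lam z) Cd x"
  proof -
    have "\<exists>p'. PD (Cx N g al v lam z) p' x \<and> degree p' \<le> g + 1
     \<and> (\<forall>i. ((\<lambda>y. coeff (CC y) i) has_vector_derivative coeff p' i) (at x))
     \<and> (\<forall>s s'. (s has_vector_derivative s') (at x) \<longrightarrow>
          ((\<lambda>y. poly (CC y) (s y)) has_vector_derivative poly p' (s x) + poly (pderiv (CC x)) (s x) * s') (at x))"
    proof (rule L_main[OF S x, where I="{..g+1}" and nd=nd])
      show "\<forall>y\<in>S. degree (CC y) \<le> g + 1" using C_props(1) by blast
      show "inj_on nd {..g+1}" by (simp add: inj_on_def nd_def)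
    qed (use dCn in auto)
    then show ?thesis using that by blast
  qed
  have Cd_eq: "Cd = smult alpha (AA x) + AA x * U - DD x * U"
  proof -
    have h1: "PD (\<lambda>y. BB y * CC y) (BB x * Cd + Bd * CC x) x" by (rule PD_mult[OF Bd(1) Cd])
    have h2: "PD (\<lambda>y. GG y) (AA x * (Pd - Ad) + Ad * DD x - 0) x"
      by (rule PD_diff[OF PD_mult[OF Ad(1) Dd] PD_const])
    have h1': "PD (\<lambda>y. GG y) (BB x * Cd + Bd * CC x) x"
      by (rule PD_transform[OF h1 S x]) (rule BC)
    have eq: "BB x * Cd + Bd * CC x = AA x * (Pd - Ad) + Ad * DD x"
      using PD_unique[OF h1' h2] by simp
    have "BB x * Cd = BB x * (smult alpha (AA x) + AA x * U - DD x * U)"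
      using eq unfolding Bd_eq Pd_eq Ad_eq by (simp add: algebra_simps)
    then show ?thesis using B_props(3)[OF x] by simp
  qed
  have pU: "poly U \<mu> = \<mu> + u1" for \<mu> by (simp add: U_def)
  show ?thesis
  proof (intro conjI allI)
    show "BB x dvd GG x" by (rule G_dvd[OF x])
    show "degree (CC x) \<le> g + 1" by (rule dCx)
    fix \<mu> :: complex
    show "((\<lambda>y. poly (AA y) \<mu>) has_vector_derivative
           poly (CC x) \<mu> - poly (BB x) \<mu> * (\<mu> + u1x N g al v lam z x)) (at x)"
      using Ad(1) unfolding PD_def Ad_eq u1_def[symmetric] by (simp add: pU)
    show "((\<lambda>y. poly (BB y) \<mu>) has_vector_derivative poly (DD x) \<mu> - poly (AA x) \<mu>) (at x)"
      using Bd(1) unfolding PD_def Bd_eq by simp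
    show "((\<lambda>y. poly (CC y) \<mu>) has_vector_derivative
           (\<mu> + alpha + u1x N g al v lam z x) * poly (AA x) \<mu>
           - poly (DD x) \<mu> * (\<mu> + u1x N g al v lam z x)) (at x)"
    proof -
      have "poly Cd \<mu> = (\<mu> + alpha + u1) * poly (AA x) \<mu> - poly (DD x) \<mu> * (\<mu> + u1)"
        unfolding Cd_eq by (simp add: pU algebra_simps)
      then show ?thesis using Cd unfolding PD_def u1_def by metis
    qed
    show "((\<lambda>y. poly (DD y) \<mu>) has_vector_derivative
           (\<mu> + alpha + u1x N g al v lam z x) * poly (BB x) \<mu> - poly (CC x) \<mu>) (at x)"
    proof -
      have "poly (Pd - Ad) \<mu> = (\<mu> + alpha + u1) * poly (BB x) \<mu> - poly (CC x) \<mu>"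
        unfolding Pd_eq Ad_eq by (simp add: pU algebra_simps)
      then show ?thesis using Dd unfolding PD_def u1_def by metis
    qed
  qed
qed

theorem result: "\<forall>x\<in>S.
     Bx N g v lam x dvd (Ax N g al v lam z x * Dx N g al v lam z x - Qpoly N al)
   \<and> degree (Cx N g al v lam z x) \<le> g + 1
   \<and> (\<forall>\<mu>::complex.
        ((\<lambda>y. poly (Ax N g al v lam z y) \<mu>) has_vector_derivative
           poly (Cx N g al v lam z x) \<mu> - poly (Bx N g v lam x) \<mu> * (\<mu> + u1x N g al v lam z x)) (at x)
      \<and> ((\<lambda>y. poly (Bx N g v lam y) \<mu>) has_vector_derivative
           poly (Dx N g al v lam z x) \<mu> - poly (Ax N g al v lam z x) \<mu>) (at x)
      \<and> ((\<lambda>y. poly (Cx N g al v lam z y) \<mu>) has_vector_derivative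
           (\<mu> + alpha_tot N al + u1x N g al v lam z x) * poly (Ax N g al v lam z x) \<mu>
           - poly (Dx N g al v lam z x) \<mu> * (\<mu> + u1x N g al v lam z x)) (at x)
      \<and> ((\<lambda>y. poly (Dx N g al v lam z y) \<mu>) has_vector_derivative
           (\<mu> + alpha_tot N al + u1x N g al v lam z x) * poly (Bx N g v lam x) \<mu>
           - poly (Cx N g al v lam z x) \<mu>) (at x))"
  using main_at by blast

end


theorem mainTheorem3:
  fixes N g :: nat and al :: "nat \<Rightarrow> complex" and v :: "real \<Rightarrow> complex"
    and lam z :: "real \<Rightarrow> nat \<Rightarrow> complex" and S :: "real set"
  assumes Ng: "N = 2*g + 1 \<or> N = 2*g + 2" and g1: "g \<ge> 1"
    and S: "open S"
    and v': "\<forall>x\<in>S. (v has_vector_derivative alpha_tot N al / 2) (at x)"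
    and b0nz: "even N \<longrightarrow> (\<forall>x\<in>S. v x \<noteq> 0)"
    and dist: "\<forall>x\<in>S. \<forall>j<g. \<forall>k<g. j \<noteq> k \<longrightarrow> lam x j \<noteq> lam x k"
    and lnz: "\<forall>x\<in>S. \<forall>j<g. lam x j \<noteq> 0"
    and znz: "\<forall>x\<in>S. \<forall>j<g. z x j \<noteq> 0"
    and lam': "\<forall>x\<in>S. \<forall>j<g. ((\<lambda>y. lam y j) has_vector_derivative
        z x j * dH_dz N g al (b0fun N (v x)) (I0fun N g al (v x)) (lam x) (z x) j) (at x)"
    and z': "\<forall>x\<in>S. \<forall>j<g. ((\<lambda>y. z y j) has_vector_derivative
        - z x j * dH_dlam N g al (b0fun N (v x)) (I0fun N g al (v x)) (lam x) (z x) j) (at x)"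
  shows "\<forall>x\<in>S.
     Bx N g v lam x dvd (Ax N g al v lam z x * Dx N g al v lam z x - Qpoly N al)
   \<and> degree (Cx N g al v lam z x) \<le> g + 1
   \<and> (\<forall>\<mu>::complex.
        ((\<lambda>y. poly (Ax N g al v lam z y) \<mu>) has_vector_derivative
           poly (Cx N g al v lam z x) \<mu> - poly (Bx N g v lam x) \<mu> * (\<mu> + u1x N g al v lam z x)) (at x)
      \<and> ((\<lambda>y. poly (Bx N g v lam y) \<mu>) has_vector_derivative
           poly (Dx N g al v lam z x) \<mu> - poly (Ax N g al v lam z x) \<mu>) (at x)
      \<and> ((\<lambda>y. poly (Cx N g al v lam z y) \<mu>) has_vector_derivative
           (\<mu> + alpha_tot N al + u1x N g al v lam z x) * poly (Ax N g al v lam z x) \<mu>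
           - poly (Dx N g al v lam z x) \<mu> * (\<mu> + u1x N g al v lam z x)) (at x)
      \<and> ((\<lambda>y. poly (Dx N g al v lam z y) \<mu>) has_vector_derivative
           (\<mu> + alpha_tot N al + u1x N g al v lam z x) * poly (Bx N g v lam x) \<mu>
           - poly (Cx N g al v lam z x) \<mu>) (at x))"
proof -
  interpret setting N g al v lam z S
    using Ng g1 S v' b0nz dist lnz znz lam' z' by (simp add: setting_def)
  show ?thesis by (rule result)
qed

end
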